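(* Let $n$ be odd. Then every integer $m$ with $\gcd(m,2n)=1$ belongs to $\mathcal S(Q_{4n})$.
   Context: $Q_{4n}=\langle x,y : x^{2n}=1,\ y^2=x^n,\ xy=yx^{-1}\rangle$ is the dicyclic group of order $4n$; $\mathcal S(G)$ denotes the set of values of the group determinant of $G$ (determinant of the matrix $(x_{g_ig_j^{-1}})_{i,j}$) when all variables $x_g$ are integers. *)

theory Defs
  imports "HOL-Algebra.Group" "HOL-Combinatorics.Permutations"
begin

text \<open>Group determinant of a finite group G: the determinant of the matrix
  (x (g * h^{-1}))_{g,h in G}, written out via the Leibniz formula for a matrix
  indexed by the finite set carrier G (independent of any ordering of G).\<close>
definition group_det :: "('a, 'b) monoid_scheme \<Rightarrow> ('a \<Rightarrow> int) \<Rightarrow> int" where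
  "group_det G x =
     (\<Sum>\<sigma> | \<sigma> permutes carrier G.
        sign \<sigma> * (\<Prod>g\<in>carrier G. x (g \<otimes>\<^bsub>G\<^esub> inv\<^bsub>G\<^esub> (\<sigma> g))))"

definition group_det_values :: "('a, 'b) monoid_scheme \<Rightarrow> int set" where
  "group_det_values G = {group_det G x | x. True}"

text \<open>The dicyclic group Q_{4n} = <x,y | x^{2n}=1, y^2=x^n, xy=yx^{-1}>, realised in
  normal form: the pair (a,b) with 0 \<le> a < 2n, b \<in> {0,1} stands for x^a y^b.
  Multiplication: x^a y^b * x^c y^d, using y x^c = x^{-c} y and y^2 = x^n.\<close>
definition dicyclic_mult :: "nat \<Rightarrow> int \<times> int \<Rightarrow> int \<times> int \<Rightarrow> int \<times> int" where
  "dicyclic_mult n p q =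
     (let a = fst p; b = snd p; c = fst q; d = snd q in
        if b = 0 then ((a + c) mod (2 * int n), d)
        else if d = 0 then ((a - c) mod (2 * int n), 1)
        else ((a - c + int n) mod (2 * int n), 0))"

definition dicyclic :: "nat \<Rightarrow> (int \<times> int) monoid" where
  "dicyclic n = \<lparr> carrier = {0..<2 * int n} \<times> {0, 1},
     Group.monoid.mult = dicyclic_mult n, Group.monoid.one = (0, 0) \<rparr>"

end

theory Submission
  imports Defs "Jordan_Normal_Form.Determinant"
begin

lemma sylvester_det:
  fixes A :: "'a :: idom mat"
  assumes A: "A \<in> carrier_mat n k" and B: "B \<in> carrier_mat k n"
  shows "det (1\<^sub>m n + A * B) = det (1\<^sub>m k + B * A)"
proof -
  let ?M = "four_block_mat (1\<^sub>m n) (-A) B (1\<^sub>m k)"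
  let ?U = "four_block_mat (1\<^sub>m n) A (0\<^sub>m k n) (1\<^sub>m k)"
  have M: "?M \<in> carrier_mat (n+k) (n+k)" using A B by auto
  have U: "?U \<in> carrier_mat (n+k) (n+k)" using A B by auto
  have dU: "det ?U = 1"
    by (subst det_four_block_mat_lower_left_zero[of _ n _ k], insert A, auto)
  have "?M * ?U = four_block_mat (1\<^sub>m n) (0\<^sub>m n k) B (1\<^sub>m k + B * A)"
    by (subst mult_four_block_mat[of _ n n _ k _ k], insert A B, auto)
  hence "det (?M * ?U) = det (1\<^sub>m k + B * A)"
    by (simp, subst det_four_block_mat_upper_right_zero[of _ n _ k], insert A B, auto)
  hence 1: "det ?M = det (1\<^sub>m k + B * A)" using det_mult[OF M U] dU by simp
  have "?U * ?M = four_block_mat (1\<^sub>m n + A * B) (0\<^sub>m n k) B (1\<^sub>m k)"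
    by (subst mult_four_block_mat[of _ n n _ k _ k], insert A B, auto)
  hence "det (?U * ?M) = det (1\<^sub>m n + A * B)"
    by (simp, subst det_four_block_mat_upper_right_zero[of _ n _ k], insert A B, auto)
  hence "det ?M = det (1\<^sub>m n + A * B)" using det_mult[OF U M] dU by simp
  with 1 show ?thesis by simp
qed

definition circ :: "nat \<Rightarrow> (int \<Rightarrow> 'a::comm_ring_1) \<Rightarrow> 'a mat" where
  "circ n u = mat n n (\<lambda>(i,j). u ((int i - int j) mod int n))"

definition conv :: "nat \<Rightarrow> (int \<Rightarrow> 'a::comm_ring_1) \<Rightarrow> (int \<Rightarrow> 'a) \<Rightarrow> int \<Rightarrow> 'a" where
  "conv n u v d = (\<Sum>j<n. u (int j) * v ((d - int j) mod int n))"

lemma circ_carrier[simp]: "circ n u \<in> carrier_mat n n"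
  by (simp add: circ_def)

lemma reflect_mod_inv:
  assumes n: "n > 0" and j: "j < n"
  shows "nat ((c - (c - int j) mod int n) mod int n) = j"
proof -
  have "(c - (c - int j) mod int n) mod int n = int j"
    using j by (simp add: mod_diff_right_eq)
  thus ?thesis using n by simp
qed

lemma reflect_mod_lt: "n > 0 \<Longrightarrow> nat ((c - int j) mod int n) < n"
  by (simp add: nat_less_iff)

lemma sum_reflect_mod:
  fixes g :: "nat \<Rightarrow> 'a::comm_monoid_add"
  assumes n: "n > 0"
  shows "(\<Sum>j<n. g j) = (\<Sum>t<n. g (nat ((c - int t) mod int n)))"
  by (rule sum.reindex_bij_witness[of _ "\<lambda>j. nat ((c - int j) mod int n)" "\<lambda>j. nat ((c - int j) mod int n)"])
    (auto simp: reflect_mod_inv[OF n] reflect_mod_lt[OF n])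

lemma circ_mult:
  assumes n: "n > 0"
  shows "circ n u * circ n v = circ n (conv n u v)"
proof (rule eq_matI)
  fix i k assume i: "i < dim_row (circ n (conv n u v))" and k: "k < dim_col (circ n (conv n u v))"
  hence i: "i < n" and k: "k < n" by (auto simp: circ_def)
  have "(circ n u * circ n v) $$ (i,k) = (\<Sum>t<n. u ((int i - int t) mod int n) * v ((int t - int k) mod int n))"
    using i k by (auto simp: circ_def scalar_prod_def atLeast0LessThan intro!: sum.cong)
  also have "\<dots> = (\<Sum>t<n. (\<lambda>j. u (int j) * v (((int i - int k) mod int n - int j) mod int n)) (nat ((int i - int t) mod int n)))"
  proof (rule sum.cong[OF refl])
    fix t assume "t \<in> {..<n}"
    have e1: "int (nat ((int i - int t) mod int n)) = (int i - int t) mod int n" using n by simp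
    have e2: "((int i - int k) mod int n - (int i - int t) mod int n) mod int n = (int t - int k) mod int n"
      by (simp add: mod_diff_eq)
    show "u ((int i - int t) mod int n) * v ((int t - int k) mod int n) =
      (\<lambda>j. u (int j) * v (((int i - int k) mod int n - int j) mod int n)) (nat ((int i - int t) mod int n))"
      unfolding e1 e2 by simp
  qed
  also have "\<dots> = (\<Sum>j<n. u (int j) * v (((int i - int k) mod int n - int j) mod int n))"
    by (rule sum_reflect_mod[OF n, symmetric])
  also have "\<dots> = circ n (conv n u v) $$ (i,k)"
    using i k by (simp add: circ_def conv_def)
  finally show "(circ n u * circ n v) $$ (i,k) = circ n (conv n u v) $$ (i,k)" .
qed (auto simp: circ_def)

definition dl :: "nat \<Rightarrow> int \<Rightarrow> int \<Rightarrow> 'a::comm_ring_1" where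
  "dl n a d = (if d mod int n = a mod int n then 1 else 0)"

lemma circ_cong: "(\<And>d. 0 \<le> d \<Longrightarrow> d < int n \<Longrightarrow> u d = u' d) \<Longrightarrow> circ n u = circ n u'"
  unfolding circ_def by (intro eq_matI) (auto simp: pos_mod_bound)

lemma conv_mod[simp]: "conv n u v (d mod int n) = conv n u v d"
  unfolding conv_def by (simp add: mod_diff_left_eq)

lemma dl_mod[simp]: "dl n a (d mod int n) = dl n a d"
  unfolding dl_def by simp

lemma sum_lt_delta:
  fixes g :: "nat \<Rightarrow> 'a::comm_ring_1"
  assumes n: "n > 0"
  shows "(\<Sum>j<n. (if int j mod int n = a mod int n then 1 else 0) * g j) = g (nat (a mod int n))"
proof -
  have "\<And>j. j < n \<Longrightarrow> (int j mod int n = a mod int n) = (j = nat (a mod int n))"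
    using n by auto
  hence "(\<Sum>j<n. (if int j mod int n = a mod int n then 1 else 0) * g j) = (\<Sum>j<n. if j = nat (a mod int n) then g j else 0)"
    by (intro sum.cong) auto
  also have "\<dots> = g (nat (a mod int n))" using n by (simp add: nat_less_iff)
  finally show ?thesis .
qed

lemma conv_dl_left:
  assumes n: "n > 0"
  shows "conv n (dl n a) v d = v ((d - a) mod int n)"
proof -
  have "conv n (dl n a) v d = (\<Sum>j<n. (if int j mod int n = a mod int n then 1 else 0) * (\<lambda>j. v ((d - int j) mod int n)) j)"
    unfolding conv_def dl_def by simp
  also have "\<dots> = v ((d - a mod int n) mod int n)" using n by (subst sum_lt_delta) auto
  finally show ?thesis by (simp add: mod_diff_right_eq)
qed

lemma conv_dl_right:
  assumes n: "n > 0"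
  shows "conv n u (dl n 0) d = u (d mod int n)"
proof -
  have "\<And>j. j < n \<Longrightarrow> ((d - int j) mod int n = 0) = (int j mod int n = d mod int n)"
  proof -
    fix j
    have "((d - int j) mod int n = 0) = (int n dvd d - int j)" by (simp add: dvd_eq_mod_eq_0)
    also have "\<dots> = (int n dvd int j - d)" by (rule dvd_diff_commute)
    also have "\<dots> = (int j mod int n = d mod int n)" by (simp add: mod_eq_dvd_iff)
    finally show "((d - int j) mod int n = 0) = (int j mod int n = d mod int n)" .
  qed
  hence "conv n u (dl n 0) d = (\<Sum>j<n. (if int j mod int n = d mod int n then 1 else 0) * u (int j))"
    unfolding conv_def dl_def by (intro sum.cong) (auto simp: mult.commute)
  also have "\<dots> = u (d mod int n)" using n by (subst sum_lt_delta) auto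
  finally show ?thesis .
qed

lemma sum_reflect_mod':
  fixes g :: "int \<Rightarrow> 'a::comm_monoid_add"
  assumes n: "n > 0"
  shows "(\<Sum>j<n. g ((c - int j) mod int n)) = (\<Sum>j<n. g (int j))"
proof -
  have "(\<Sum>j<n. g (int j)) = (\<Sum>t<n. g (int (nat ((c - int t) mod int n))))"
    by (rule sum_reflect_mod[OF n])
  thus ?thesis using n by simp
qed

lemma conv_const_left:
  assumes n: "n > 0"
  shows "conv n (\<lambda>_. c) v d = c * (\<Sum>j<n. v (int j))"
  unfolding conv_def by (simp add: sum_distrib_left[symmetric] sum_reflect_mod'[OF n])

lemma conv_const_right:
  shows "conv n u (\<lambda>_. c) d = c * (\<Sum>j<n. u (int j))"
  unfolding conv_def by (simp add: sum_distrib_left mult.commute)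

lemma conv_add_left: "conv n (\<lambda>d. u d + u' d) v d = conv n u v d + conv n u' v d"
  unfolding conv_def by (simp add: distrib_right sum.distrib)

lemma conv_diff_left: "conv n (\<lambda>d. u d - u' d) v d = conv n u v d - conv n u' v d"
  unfolding conv_def by (simp add: left_diff_distrib sum_subtractf)

lemma conv_scale_left: "conv n (\<lambda>d. c * u d) v d = c * conv n u v d"
  unfolding conv_def by (simp add: sum_distrib_left mult.assoc)

lemma conv_sum_left: "conv n (\<lambda>d. \<Sum>i\<in>I. f i d) v d = (\<Sum>i\<in>I. conv n (f i) v d)"
  unfolding conv_def by (simp add: sum_distrib_right sum.swap[of _ I])

lemma conv_add_right: "conv n u (\<lambda>d. v d + v' d) d = conv n u v d + conv n u v' d"
  unfolding conv_def by (simp add: distrib_left sum.distrib)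

lemma conv_scale_right: "conv n u (\<lambda>d. c * v d) d = c * conv n u v d"
  unfolding conv_def by (simp add: sum_distrib_left ac_simps)

lemma conv_comm:
  assumes n: "n > 0"
  shows "conv n u v d = conv n v u d"
proof -
  have "conv n v u d = (\<Sum>j<n. v (int j) * u ((d - int j) mod int n))" by (simp add: conv_def)
  also have "\<dots> = (\<Sum>t<n. (\<lambda>j. v (int j) * u ((d - int j) mod int n)) (nat ((d - int t) mod int n)))"
    by (rule sum_reflect_mod[OF n])
  also have "\<dots> = (\<Sum>t<n. u (int t) * v ((d - int t) mod int n))"
  proof (rule sum.cong[OF refl])
    fix t assume "t \<in> {..<n}"
    hence "(d - (d - int t) mod int n) mod int n = int t" by (simp add: mod_diff_right_eq)
    thus "(\<lambda>j. v (int j) * u ((d - int j) mod int n)) (nat ((d - int t) mod int n)) = u (int t) * v ((d - int t) mod int n)"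
      using n by (simp add: mult.commute)
  qed
  finally show ?thesis by (simp add: conv_def)
qed

lemma sum_shift_mod:
  fixes g :: "int \<Rightarrow> 'a::comm_monoid_add"
  assumes n: "n > 0"
  shows "(\<Sum>j<n. g ((int j + c) mod int n)) = (\<Sum>j<n. g (int j))"
proof -
  have "(\<Sum>j<n. g (int j)) = (\<Sum>j<n. (\<lambda>j. g (int j)) (nat ((int j + c) mod int n)))"
  proof (rule sum.reindex_bij_witness[of _ "\<lambda>j. nat ((int j + c) mod int n)" "\<lambda>j. nat ((int j - c) mod int n)"])
    fix a assume a: "a \<in> {..<n}"
    have "((int a - c) mod int n + c) mod int n = int a" using a by (simp add: mod_add_left_eq)
    thus "nat ((int (nat ((int a - c) mod int n)) + c) mod int n) = a" using n by simp
    show "nat ((int a - c) mod int n) \<in> {..<n}" using n by (simp add: nat_less_iff)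
    show "(\<lambda>j. g (int j)) (nat ((int (nat ((int a - c) mod int n)) + c) mod int n)) = g (int a)"
      using \<open>((int a - c) mod int n + c) mod int n = int a\<close> n by simp
  next
    fix b assume b: "b \<in> {..<n}"
    have "((int b + c) mod int n - c) mod int n = int b" using b by (simp add: mod_diff_left_eq)
    thus "nat ((int (nat ((int b + c) mod int n)) - c) mod int n) = b" using n by simp
    show "nat ((int b + c) mod int n) \<in> {..<n}" using n by (simp add: nat_less_iff)
  qed
  thus ?thesis using n by simp
qed

lemma conv_assoc:
  assumes n: "n > 0"
  shows "conv n (conv n u v) w d = conv n u (conv n v w) d"
proof -
  have "conv n (conv n u v) w d = (\<Sum>j<n. \<Sum>i<n. u (int i) * (v ((int j - int i) mod int n) * w ((d - int j) mod int n)))"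
    unfolding conv_def by (simp add: sum_distrib_right mult.assoc)
  also have "\<dots> = (\<Sum>i<n. \<Sum>j<n. u (int i) * (v ((int j - int i) mod int n) * w ((d - int j) mod int n)))"
    by (rule sum.swap)
  also have "\<dots> = (\<Sum>i<n. u (int i) * (\<Sum>l<n. v (int l) * w (((d - int i) mod int n - int l) mod int n)))"
  proof (rule sum.cong[OF refl])
    fix i assume "i \<in> {..<n}"
    have "(\<Sum>j<n. v ((int j - int i) mod int n) * w ((d - int j) mod int n))
      = (\<Sum>j<n. (\<lambda>x. v ((x - int i) mod int n) * w ((d - x) mod int n)) ((int j + int i) mod int n))"
      by (rule sum_shift_mod[OF n, symmetric])
    also have "\<dots> = (\<Sum>l<n. v (int l) * w (((d - int i) mod int n - int l) mod int n))"
    proof (rule sum.cong[OF refl])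
      fix l assume l: "l \<in> {..<n}"
      have 1: "((int l + int i) mod int n - int i) mod int n = int l" using l by (simp add: mod_diff_left_eq)
      have 2: "(d - (int l + int i) mod int n) mod int n = ((d - int i) mod int n - int l) mod int n"
      proof -
        have "(d - (int l + int i) mod int n) mod int n = (d - (int l + int i)) mod int n" by (rule mod_diff_right_eq)
        moreover have "((d - int i) mod int n - int l) mod int n = ((d - int i) - int l) mod int n" by (rule mod_diff_left_eq)
        moreover have "d - (int l + int i) = (d - int i) - int l" by simp
        ultimately show ?thesis by simp
      qed
      show "(\<lambda>x. v ((x - int i) mod int n) * w ((d - x) mod int n)) ((int l + int i) mod int n) =
            v (int l) * w (((d - int i) mod int n - int l) mod int n)" by (simp only: 1 2)
    qed
    finally show "(\<Sum>j<n. u (int i) * (v ((int j - int i) mod int n) * w ((d - int j) mod int n))) =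
          u (int i) * (\<Sum>l<n. v (int l) * w (((d - int i) mod int n - int l) mod int n))"
      unfolding sum_distrib_left[symmetric] by simp
  qed
  also have "\<dots> = conv n u (conv n v w) d" unfolding conv_def by simp
  finally show ?thesis .
qed

lemma sum_conv:
  assumes n: "n > 0"
  shows "(\<Sum>d<n. conv n u v (int d)) = (\<Sum>j<n. u (int j)) * (\<Sum>j<n. v (int j))"
proof -
  have "(\<Sum>d<n. conv n u v (int d)) = (\<Sum>d<n. \<Sum>j<n. u (int j) * v ((int d - int j) mod int n))"
    unfolding conv_def by simp
  also have "\<dots> = (\<Sum>j<n. \<Sum>d<n. u (int j) * v ((int d - int j) mod int n))"
    by (rule sum.swap)
  also have "\<dots> = (\<Sum>j<n. u (int j) * (\<Sum>d<n. v ((int d + (- int j)) mod int n)))"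
    unfolding sum_distrib_left by simp
  also have "\<dots> = (\<Sum>j<n. u (int j) * (\<Sum>d<n. v (int d)))"
    by (subst sum_shift_mod[OF n]) (rule refl)
  finally show ?thesis by (simp add: sum_distrib_right)
qed


lemma circ_dl0_scalar:
  assumes n: "n > 0"
  shows "circ n (\<lambda>d. c * dl n 0 d) = c \<cdot>\<^sub>m 1\<^sub>m n"
proof (rule eq_matI)
  fix i j assume "i < dim_row (c \<cdot>\<^sub>m (1\<^sub>m n :: 'a :: comm_ring_1 mat))" "j < dim_col (c \<cdot>\<^sub>m (1\<^sub>m n :: 'a mat))"
  hence i: "i < n" and j: "j < n" by auto
  have "((int i - int j) mod int n = 0) = (i = j)"
  proof
    assume "(int i - int j) mod int n = 0"
    hence "int i mod int n = int j mod int n" by (simp add: mod_eq_dvd_iff dvd_eq_mod_eq_0)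
    thus "i = j" using i j by simp
  qed simp
  thus "circ n (\<lambda>d. c * dl n 0 d) $$ (i, j) = (c \<cdot>\<^sub>m 1\<^sub>m n) $$ (i, j)"
    using i j by (simp add: circ_def dl_def)
qed (auto simp: circ_def)


lemma mod_diff_zero_iff:
  assumes "i < n" "j < n"
  shows "((int i - int j) mod int n = 0) = (i = j)"
proof
  assume "(int i - int j) mod int n = 0"
  hence "int i mod int n = int j mod int n" by (simp add: mod_eq_dvd_iff dvd_eq_mod_eq_0)
  thus "i = j" using assms by simp
qed simp

lemma det_circ_one_plus:
  assumes n: "n > 0"
  shows "det (circ n (\<lambda>d. dl n 0 d + (c :: 'a :: idom))) = 1 + c * of_nat n"
proof -
  let ?X = "mat n 1 (\<lambda>_. c)" and ?Y = "mat 1 n (\<lambda>_. 1 :: 'a)"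
  have "circ n (\<lambda>d. dl n 0 d + c) = 1\<^sub>m n + ?X * ?Y"
  proof (rule eq_matI)
    fix i j assume "i < dim_row (1\<^sub>m n + ?X * ?Y)" "j < dim_col (1\<^sub>m n + ?X * ?Y)"
    hence i: "i < n" and j: "j < n" by auto
    show "circ n (\<lambda>d. dl n 0 d + c) $$ (i, j) = (1\<^sub>m n + ?X * ?Y) $$ (i, j)"
      using i j mod_diff_zero_iff[OF i j] by (simp add: circ_def dl_def scalar_prod_def)
  qed (auto simp: circ_def)
  also have "det \<dots> = det (1\<^sub>m 1 + ?Y * ?X)"
    by (rule sylvester_det) auto
  also have "\<dots> = 1 + c * of_nat n"
    by (subst det_single) (auto simp: scalar_prod_def)
  finally show ?thesis .
qed

lemma det_rows_cols_perm:
  assumes A: "A \<in> carrier_mat n n" and p: "p permutes {0..<n}"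
  shows "det (mat n n (\<lambda>(i,j). A $$ (p i, p j))) = det (A :: 'a :: comm_ring_1 mat)"
proof -
  let ?B = "mat n n (\<lambda>(i,j). A $$ (i, p j))"
  have B: "?B \<in> carrier_mat n n" by auto
  have "mat n n (\<lambda>(i,j). A $$ (p i, p j)) = mat n n (\<lambda>(i,j). ?B $$ (p i, j))"
    using permutes_in_image[OF p] by (intro eq_matI) auto
  hence 1: "det (mat n n (\<lambda>(i,j). A $$ (p i, p j))) = signof p * det ?B"
    using det_permute_rows[OF B p] by simp
  have "transpose_mat ?B = mat n n (\<lambda>(i,j). (transpose_mat A) $$ (p i, j))"
    using permutes_in_image[OF p] A by (intro eq_matI) auto
  hence "det (transpose_mat ?B) = signof p * det (transpose_mat A)"
    using det_permute_rows[of "transpose_mat A" n p] A p by simp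
  hence 2: "det ?B = signof p * det A" using det_transpose[OF B] det_transpose[OF A] by simp
  have "signof p * signof p = (1 :: 'a)"
    by (simp add: of_int_mult[symmetric] del: of_int_mult)
  thus ?thesis using 1 2 by (simp add: mult.assoc[symmetric])
qed

lemma det_circ_sc:
  assumes n: "n > 0" and kk: "(\<kappa> * \<kappa>') mod int n = 1 mod int n"
  shows "det (circ n (\<lambda>d. u ((\<kappa> * d) mod int n))) = det (circ n (u :: int \<Rightarrow> 'a :: comm_ring_1))"
proof -
  define p where "p = (\<lambda>i. if i < n then nat ((\<kappa> * int i) mod int n) else i)"
  have pin: "p i < n" if "i < n" for i using that n by (simp add: p_def nat_less_iff)
  have inj: "inj_on p {0..<n}"
  proof (rule inj_onI)
    fix i j assume i: "i \<in> {0..<n}" and j: "j \<in> {0..<n}" and e: "p i = p j"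
    hence "nat ((\<kappa> * int i) mod int n) = nat ((\<kappa> * int j) mod int n)" by (simp add: p_def)
    hence "(\<kappa> * int i) mod int n = (\<kappa> * int j) mod int n" using n by (simp add: eq_nat_nat_iff)
    hence "(\<kappa>' * (\<kappa> * int i)) mod int n = (\<kappa>' * (\<kappa> * int j)) mod int n"
      by (metis mod_mult_right_eq)
    hence "((\<kappa> * \<kappa>') * int i) mod int n = ((\<kappa> * \<kappa>') * int j) mod int n"
      by (simp add: ac_simps)
    hence "((\<kappa> * \<kappa>') mod int n * int i) mod int n = ((\<kappa> * \<kappa>') mod int n * int j) mod int n"
      by (metis mod_mult_left_eq)
    hence "(1 mod int n * int i) mod int n = (1 mod int n * int j) mod int n" unfolding kk .
    hence "int i mod int n = int j mod int n" by (metis mod_mult_left_eq mult_1)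
    thus "i = j" using i j by simp
  qed
  have perm: "p permutes {0..<n}"
  proof (rule bij_imp_permutes)
    show "bij_betw p {0..<n} {0..<n}"
      using inj pin by (intro bij_betw_imageI[OF inj] endo_inj_surj[OF _ _ inj]) auto
    show "p x = x" if "x \<notin> {0..<n}" for x using that by (simp add: p_def)
  qed
  have "circ n (\<lambda>d. u ((\<kappa> * d) mod int n)) = mat n n (\<lambda>(i,j). circ n u $$ (p i, p j))"
  proof (rule eq_matI)
    fix i j assume "i < dim_row (mat n n (\<lambda>(i,j). circ n u $$ (p i, p j)))" "j < dim_col (mat n n (\<lambda>(i,j). circ n u $$ (p i, p j)))"
    hence i: "i < n" and j: "j < n" by auto
    have "(\<kappa> * ((int i - int j) mod int n)) mod int n = ((\<kappa> * int i) mod int n - (\<kappa> * int j) mod int n) mod int n"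
      by (simp add: mod_mult_right_eq mod_diff_eq right_diff_distrib)
    thus "circ n (\<lambda>d. u ((\<kappa> * d) mod int n)) $$ (i, j) = mat n n (\<lambda>(i,j). circ n u $$ (p i, p j)) $$ (i, j)"
      using i j pin n by (simp add: circ_def p_def)
  qed (auto simp: circ_def)
  thus ?thesis using det_rows_cols_perm[OF circ_carrier perm] by simp
qed

lemma dl_shift: "dl n a ((d - b) mod int n) = dl n (a + b) d"
proof -
  have "((d - b) mod int n = a mod int n) = (d mod int n = (a + b) mod int n)"
    by (metis add_diff_cancel_right' diff_add_cancel mod_diff_left_eq mod_add_left_eq)
  thus ?thesis by (simp add: dl_def)
qed

lemma dl_shift': "dl n a (d - b) = dl n (a + b) d"
  using dl_shift[of n a d b] by simp

definition Ael :: "nat \<Rightarrow> int \<Rightarrow> 'a::comm_ring_1" where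
  "Ael n d = dl n 1 d - dl n 0 d + 1"

definition Gk :: "nat \<Rightarrow> nat \<Rightarrow> int \<Rightarrow> 'a::comm_ring_1" where
  "Gk n k d = (\<Sum>i<k. dl n (int i) d)"

lemma Gk_shift: "Gk n k ((d - 1) mod int n) - Gk n k d = dl n (int k) d - (dl n 0 d :: 'a::comm_ring_1)"
proof -
  have "Gk n k ((d - 1) mod int n) - Gk n k d = (\<Sum>i<k. (dl n (int (Suc i)) d - dl n (int i) d :: 'a))"
    by (simp add: Gk_def dl_shift' sum_subtractf add.commute)
  also have "\<dots> = dl n (int k) d - dl n 0 d"
    using sum_lessThan_telescope[of "\<lambda>i. dl n (int i) d :: 'a" k] by simp
  finally show ?thesis .
qed


lemma sum_dl:
  assumes n: "n > 0"
  shows "(\<Sum>j<n. dl n a (int j)) = (1 :: 'a :: comm_ring_1)"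
  using sum_lt_delta[OF n, of a "\<lambda>_. 1 :: 'a"] by (simp add: dl_def)

lemma conv_Ael:
  assumes n: "n > 0"
  shows "conv n (Ael n) v d = v ((d - 1) mod int n) - v (d mod int n) + (\<Sum>j<n. v (int j))"
proof -
  have "conv n (Ael n) v d = conv n (dl n 1) v d - conv n (dl n 0) v d + conv n (\<lambda>_. 1) v d"
    unfolding conv_def Ael_def by (simp add: algebra_simps sum.distrib sum_subtractf)
  thus ?thesis by (simp add: conv_dl_left[OF n] conv_const_left[OF n])
qed

lemma sum_Gk:
  assumes n: "n > 0"
  shows "(\<Sum>j<n. Gk n k (int j)) = (of_nat k :: 'a :: comm_ring_1)"
  unfolding Gk_def by (subst sum.swap) (simp add: sum_dl[OF n])

lemma conv_Ael_Gk:
  assumes n: "n > 0"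
  shows "conv n (Ael n) (Gk n k) d = dl n (int k) d - dl n 0 d + (of_nat k :: 'a :: comm_ring_1)"
proof -
  have 1: "Gk n k (d mod int n) = (Gk n k d :: 'a)" by (simp add: Gk_def)
  have 2: "Gk n k ((d - 1) mod int n) - Gk n k d = dl n (int k) d - (dl n 0 d :: 'a)" by (rule Gk_shift)
  have 3: "(\<Sum>j<n. Gk n k (int j)) = (of_nat k :: 'a)" by (rule sum_Gk[OF n])
  show ?thesis unfolding conv_Ael[OF n] 1 2 3 ..
qed

lemma mod_inv_cancel:
  assumes kk: "(\<kappa> * k) mod int n = 1 mod int n"
  shows "(\<kappa> * (k * d)) mod int n = d mod int n"
proof -
  have "(\<kappa> * (k * d)) mod int n = ((\<kappa> * k) mod int n * d) mod int n"
    by (simp add: mod_mult_left_eq mult.assoc)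
  also have "\<dots> = d mod int n" unfolding kk by (simp add: mod_mult_left_eq)
  finally show ?thesis .
qed

lemma dl_scale:
  assumes kk: "(\<kappa> * k) mod int n = 1 mod int n"
  shows "dl n a (\<kappa> * d) = dl n (k * a) d"
proof -
  have k2: "(k * \<kappa>) mod int n = 1 mod int n" using kk by (simp add: mult.commute)
  have "((\<kappa> * d) mod int n = a mod int n) = (d mod int n = (k * a) mod int n)"
  proof
    assume h: "(\<kappa> * d) mod int n = a mod int n"
    have "d mod int n = (k * (\<kappa> * d)) mod int n" using mod_inv_cancel[OF k2, of d] by simp
    also have "\<dots> = (k * ((\<kappa> * d) mod int n)) mod int n" by (simp add: mod_mult_right_eq)
    also have "\<dots> = (k * (a mod int n)) mod int n" using h by simp
    also have "\<dots> = (k * a) mod int n" by (simp add: mod_mult_right_eq)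
    finally show "d mod int n = (k * a) mod int n" .
  next
    assume h: "d mod int n = (k * a) mod int n"
    have "(\<kappa> * d) mod int n = (\<kappa> * (d mod int n)) mod int n" by (simp add: mod_mult_right_eq)
    also have "\<dots> = (\<kappa> * ((k * a) mod int n)) mod int n" using h by simp
    also have "\<dots> = (\<kappa> * (k * a)) mod int n" by (simp add: mod_mult_right_eq)
    finally have "(\<kappa> * d) mod int n = (\<kappa> * (k * a)) mod int n" .
    also have "\<dots> = a mod int n" by (rule mod_inv_cancel[OF kk])
    finally show "(\<kappa> * d) mod int n = a mod int n" .
  qed
  thus ?thesis by (simp add: dl_def)
qed

lemma det_circ_Ael_nz:
  assumes n: "n > 0"
  shows "det (circ n (Ael n :: int \<Rightarrow> 'a :: field_char_0)) \<noteq> 0"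
proof -
  define S :: 'a where "S = (\<Sum>j<n. of_nat j)"
  define \<beta> :: 'a where "\<beta> = (1 - S) / of_nat n"
  define B :: "int \<Rightarrow> 'a" where "B = (\<lambda>d. of_int (d mod int n) + \<beta>)"
  have sB: "(\<Sum>j<n. B (int j)) = 1"
    using n by (simp add: B_def sum.distrib S_def[symmetric] \<beta>_def)
  have key: "of_int ((d - 1) mod int n) - of_int (d mod int n) + 1 = (of_nat n * dl n 0 d :: 'a)" for d
  proof -
    have e: "(d - 1) mod int n = (d mod int n - 1) mod int n" by (simp add: mod_diff_left_eq)
    show ?thesis
    proof (cases "d mod int n = 0")
      case True
      hence "(d - 1) mod int n = int n - 1" using n unfolding e by (simp add: zmod_minus1)
      thus ?thesis using True by (simp add: dl_def)
    next
      case False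
      have "0 \<le> d mod int n" "d mod int n < int n" using n by auto
      hence "(d - 1) mod int n = d mod int n - 1" using False unfolding e by (intro mod_pos_pos_trivial) auto
      thus ?thesis using False by (simp add: dl_def)
    qed
  qed
  have "circ n (Ael n) * circ n B = circ n (\<lambda>d. of_nat n * dl n 0 d)"
    unfolding circ_mult[OF n]
  proof (rule circ_cong)
    fix d :: int
    show "conv n (Ael n) B d = of_nat n * dl n 0 d"
      using key[of d] sB by (simp add: conv_Ael[OF n] B_def)
  qed
  also have "\<dots> = of_nat n \<cdot>\<^sub>m 1\<^sub>m n" by (rule circ_dl0_scalar[OF n])
  finally have "det (circ n (Ael n)) * det (circ n B) = of_nat n ^ n"
    using det_mult[OF circ_carrier circ_carrier, of n "Ael n" B] by simp
  thus ?thesis using n by auto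
qed


lemma det_circ_Gk:
  assumes n: "n > 0" and kk: "(\<kappa> * int k) mod int n = 1 mod int n"
  shows "det (circ n (Gk n k :: int \<Rightarrow> 'a :: field_char_0)) = of_nat k"
proof -
  define c :: 'a where "c = (of_nat k - 1) / of_nat n"
  define sA :: "int \<Rightarrow> 'a" where "sA = (\<lambda>d. Ael n ((\<kappa> * d) mod int n))"
  have sA: "sA d = dl n (int k) d - dl n 0 d + 1" for d
    using dl_scale[OF kk, of 1 d, where 'a='a] dl_scale[OF kk, of 0 d, where 'a='a] by (simp add: sA_def Ael_def)
  have ssA: "(\<Sum>j<n. sA (int j)) = of_nat n"
    using n by (simp add: sA sum.distrib sum_subtractf sum_dl[OF n])
  have cv: "conv n sA (\<lambda>d. dl n 0 d + c) d = dl n (int k) d - dl n 0 d + of_nat k" for d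
  proof -
    have "conv n sA (\<lambda>d. dl n 0 d + c) d = conv n sA (dl n 0) d + conv n sA (\<lambda>_. c) d"
      by (rule conv_add_right)
    also have "\<dots> = sA (d mod int n) + c * of_nat n"
      by (simp add: conv_dl_right[OF n] conv_const_right ssA)
    also have "\<dots> = dl n (int k) d - dl n 0 d + of_nat k"
      using n by (simp add: sA c_def)
    finally show ?thesis .
  qed
  have "circ n (Ael n) * circ n (Gk n k) = circ n sA * circ n (\<lambda>d. dl n 0 d + c)"
    unfolding circ_mult[OF n] by (rule circ_cong) (simp add: cv conv_Ael_Gk[OF n])
  hence "det (circ n (Ael n) * circ n (Gk n k)) = det (circ n sA * circ n (\<lambda>d. dl n 0 d + c))"
    by simp
  hence "det (circ n (Ael n)) * det (circ n (Gk n k)) = det (circ n sA) * det (circ n (\<lambda>d. dl n 0 d + c))"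
    unfolding det_mult[OF circ_carrier circ_carrier] .
  also have "det (circ n sA) = det (circ n (Ael n))"
    unfolding sA_def by (rule det_circ_sc[OF n]) (use kk in \<open>simp add: mult.commute\<close>)
  also have "det (circ n (\<lambda>d. dl n 0 d + c)) = of_nat k"
    using n by (simp add: det_circ_one_plus c_def)
  finally show ?thesis using det_circ_Ael_nz[OF n, where 'a='a] by simp
qed

definition Pel :: "nat \<Rightarrow> int \<Rightarrow> 'a::comm_ring_1" where
  "Pel n d = dl n 1 d + dl n 0 d"

lemma det_circ_Pel_nz:
  assumes n: "n > 0" and odd: "odd n"
  shows "det (circ n (Pel n :: int \<Rightarrow> 'a :: field_char_0)) \<noteq> 0"
proof -
  define Q :: "int \<Rightarrow> 'a" where "Q = (\<lambda>d. (-1) ^ nat (d mod int n))"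
  have key: "Q ((d - 1) mod int n) + Q (d mod int n) = 2 * dl n 0 d" for d
  proof -
    have e: "(d - 1) mod int n = (d mod int n - 1) mod int n" by (simp add: mod_diff_left_eq)
    show ?thesis
    proof (cases "d mod int n = 0")
      case True
      hence "(d - 1) mod int n = int n - 1" using n unfolding e by (simp add: zmod_minus1)
      moreover have "even (nat (int n - 1))" using odd n by (simp add: nat_diff_distrib)
      ultimately have "Q ((d - 1) mod int n) = 1" unfolding Q_def mod_mod_trivial by simp
      thus ?thesis using True by (simp add: dl_def Q_def)
    next
      case False
      have r: "0 \<le> d mod int n" "d mod int n < int n" using n by auto
      hence e2: "(d mod int n - 1) mod int n = d mod int n - 1" using False by (intro mod_pos_pos_trivial) auto
      have "nat (d mod int n) = Suc (nat (d mod int n - 1))" using r False by simp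
      thus ?thesis using False e e2 by (simp add: dl_def Q_def)
    qed
  qed
  have "circ n (Pel n) * circ n Q = circ n (\<lambda>d. 2 * dl n 0 d)"
    unfolding circ_mult[OF n]
  proof (rule circ_cong)
    fix d :: int
    have "conv n (Pel n) Q d = conv n (dl n 1) Q d + conv n (dl n 0) Q d"
      unfolding Pel_def by (rule conv_add_left)
    thus "conv n (Pel n) Q d = 2 * dl n 0 d" using key[of d] by (simp add: conv_dl_left[OF n])
  qed
  also have "\<dots> = 2 \<cdot>\<^sub>m 1\<^sub>m n" by (rule circ_dl0_scalar[OF n])
  finally have "det (circ n (Pel n)) * det (circ n Q) = 2 ^ n"
    using det_mult[OF circ_carrier circ_carrier, of n "Pel n" Q] by simp
  thus ?thesis by auto
qed

definition Kel :: "nat \<Rightarrow> nat \<Rightarrow> nat \<Rightarrow> int \<Rightarrow> 'a::comm_ring_1" where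
  "Kel n k k' d = (\<Sum>j<k'. (-1) ^ j * dl n (int k * int j) d)"

lemma alt_telescope:
  fixes f :: "nat \<Rightarrow> 'a::comm_ring_1"
  shows "(\<Sum>j<m. (-1) ^ j * (f (Suc j) + f j)) = f 0 - (-1) ^ m * f m"
  by (induction m) (simp_all add: algebra_simps)

lemma conv_Pk_Kel:
  assumes n: "n > 0" and k'odd: "odd k'" and kk': "(int k * int k') mod int n = 1 mod int n"
  shows "conv n (\<lambda>d. dl n (int k) d + dl n 0 d) (Kel n k k') d = (Pel n d :: 'a :: comm_ring_1)"
proof -
  have "conv n (\<lambda>d. dl n (int k) d + dl n 0 d) (Kel n k k') d = Kel n k k' ((d - int k) mod int n) + Kel n k k' (d mod int n)"
    by (simp add: conv_add_left conv_dl_left[OF n])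
  also have "\<dots> = (\<Sum>j<k'. (-1) ^ j * (dl n (int k * int (Suc j)) d + dl n (int k * int j) d) :: 'a)"
  proof -
    have "Kel n k k' ((d - int k) mod int n) = (\<Sum>j<k'. (-1) ^ j * dl n (int k * int (Suc j)) d :: 'a)"
      unfolding Kel_def dl_shift by (intro sum.cong refl) (simp add: algebra_simps)
    moreover have "Kel n k k' (d mod int n) = (\<Sum>j<k'. (-1) ^ j * dl n (int k * int j) d :: 'a)"
      unfolding Kel_def by simp
    ultimately show ?thesis by (simp add: sum.distrib distrib_left)
  qed
  also have "\<dots> = dl n 0 d + dl n (int k * int k') d"
    using alt_telescope[where m=k' and f="\<lambda>j. dl n (int k * int j) d :: 'a"] k'odd by simp
  also have "dl n (int k * int k') d = (dl n 1 d :: 'a)"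
    unfolding dl_def using kk' by simp
  finally show ?thesis by (simp add: Pel_def add.commute)
qed

lemma det_circ_Kel:
  assumes n: "n > 0" and odd: "odd n" and k'odd: "odd k'" and kk': "(int k * int k') mod int n = 1 mod int n"
    and kk: "(\<kappa> * int k) mod int n = 1 mod int n"
  shows "det (circ n (Kel n k k' :: int \<Rightarrow> 'a :: field_char_0)) = 1"
proof -
  define sP :: "int \<Rightarrow> 'a" where "sP = (\<lambda>d. Pel n ((\<kappa> * d) mod int n))"
  have sP: "sP d = dl n (int k) d + dl n 0 d" for d
    using dl_scale[OF kk, of 1 d, where 'a='a] dl_scale[OF kk, of 0 d, where 'a='a] by (simp add: sP_def Pel_def)
  have sPe: "sP = (\<lambda>d. dl n (int k) d + dl n 0 d)" by (rule ext, rule sP)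
  have "circ n sP * circ n (Kel n k k') = circ n (Pel n)"
    unfolding circ_mult[OF n] sPe by (rule circ_cong) (rule conv_Pk_Kel[OF n k'odd kk'])
  hence "det (circ n sP * circ n (Kel n k k')) = det (circ n (Pel n))" by simp
  hence "det (circ n sP) * det (circ n (Kel n k k')) = det (circ n (Pel n))"
    unfolding det_mult[OF circ_carrier circ_carrier] .
  moreover have "det (circ n sP) = det (circ n (Pel n))"
    unfolding sP_def by (rule det_circ_sc[OF n]) (use kk in \<open>simp add: mult.commute\<close>)
  ultimately show ?thesis using det_circ_Pel_nz[OF n odd, where 'a='a] by simp
qed


definition V0 :: "nat \<Rightarrow> nat \<Rightarrow> nat \<Rightarrow> int \<Rightarrow> 'a::comm_ring_1" where
  "V0 n k k' = conv n (Gk n k) (Kel n k k')"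

lemma sum_alt: "(\<Sum>i<m. (-1) ^ i :: 'a :: comm_ring_1) = (if even m then 0 else 1)"
  by (induction m) auto

lemma sum_Kel:
  assumes n: "n > 0" and k'odd: "odd k'"
  shows "(\<Sum>j<n. Kel n k k' (int j)) = (1 :: 'a :: comm_ring_1)"
proof -
  have "(\<Sum>j<n. Kel n k k' (int j)) = (\<Sum>i<k'. (-1) ^ i * (\<Sum>j<n. dl n (int k * int i) (int j)) :: 'a)"
    unfolding Kel_def by (subst sum.swap) (simp add: sum_distrib_left)
  also have "\<dots> = (\<Sum>i<k'. (-1) ^ i)" by (simp add: sum_dl[OF n])
  finally show ?thesis using k'odd by (simp add: sum_alt)
qed

lemma sum_V0:
  assumes n: "n > 0" and k'odd: "odd k'"
  shows "(\<Sum>j<n. V0 n k k' (int j)) = (of_nat k :: 'a :: comm_ring_1)"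
  unfolding V0_def sum_conv[OF n] sum_Gk[OF n] sum_Kel[OF n k'odd] by simp

lemma det_circ_V0:
  assumes n: "n > 0" and odd: "odd n" and k'odd: "odd k'" and kk': "(int k * int k') mod int n = 1 mod int n"
    and kk: "(\<kappa> * int k) mod int n = 1 mod int n"
  shows "det (circ n (V0 n k k' :: int \<Rightarrow> 'a :: field_char_0)) = of_nat k"
proof -
  have "det (circ n (V0 n k k' :: int \<Rightarrow> 'a)) = det (circ n (Gk n k) * circ n (Kel n k k'))"
    unfolding V0_def circ_mult[OF n] ..
  also have "\<dots> = of_nat k"
    unfolding det_mult[OF circ_carrier circ_carrier] det_circ_Gk[OF n kk] det_circ_Kel[OF n odd k'odd kk' kk] by simp
  finally show ?thesis .
qed

lemma det_circ_V0_shift: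
  assumes n: "n > 0" and odd: "odd n" and k'odd: "odd k'" and kk': "(int k * int k') mod int n = 1 mod int n"
    and kk: "(\<kappa> * int k) mod int n = 1 mod int n" and k: "k > 0"
  shows "det (circ n (\<lambda>d. V0 n k k' d + e)) = of_nat k + (e :: 'a :: field_char_0) * of_nat n" (is "?l = ?r")
proof -
  define c :: 'a where "c = e / of_nat k"
  have "circ n (V0 n k k') * circ n (\<lambda>d. dl n 0 d + c) = circ n (\<lambda>d. V0 n k k' d + e)"
    unfolding circ_mult[OF n]
  proof (rule circ_cong)
    fix d :: int
    have "conv n (V0 n k k') (\<lambda>d. dl n 0 d + c) d = conv n (V0 n k k') (dl n 0) d + conv n (V0 n k k') (\<lambda>_. c) d"
      by (rule conv_add_right)
    also have "\<dots> = V0 n k k' d + e"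
    proof -
      have 1: "V0 n k k' (d mod int n) = (V0 n k k' d :: 'a)" by (simp add: V0_def)
      have 2: "(\<Sum>j<n. V0 n k k' (int j)) = (of_nat k :: 'a)" by (rule sum_V0[OF n k'odd])
      show ?thesis using k unfolding conv_dl_right[OF n] conv_const_right 1 2 by (simp add: c_def)
    qed
    finally show "conv n (V0 n k k') (\<lambda>d. dl n 0 d + c) d = V0 n k k' d + e" .
  qed
  hence "?l = det (circ n (V0 n k k')) * det (circ n (\<lambda>d. dl n 0 d + c))"
    by (metis det_mult[OF circ_carrier circ_carrier])
  also have "\<dots> = of_nat k * (1 + c * of_nat n)"
    unfolding det_circ_V0[OF n odd k'odd kk' kk] det_circ_one_plus[OF n] ..
  also have "\<dots> = ?r" using k by (simp add: c_def field_simps)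
  finally show ?thesis .
qed

definition Hel :: "nat \<Rightarrow> nat \<Rightarrow> int \<Rightarrow> 'a::comm_ring_1" where
  "Hel n k d = (\<Sum>i<k. (-1) ^ i * dl n (int i) d)"

definition Oel :: "nat \<Rightarrow> nat \<Rightarrow> int \<Rightarrow> 'a::comm_ring_1" where
  "Oel n k d = (\<Sum>i<k. (if odd i then 1 else 0) * dl n (int i) d)"

lemma Gk_split: "Gk n k = (\<lambda>d. Hel n k d + 2 * Oel n k d)"
proof (rule ext)
  fix d
  have "Gk n k d = (\<Sum>i<k. ((-1) ^ i + 2 * (if odd i then 1 else 0)) * dl n (int i) d)"
    unfolding Gk_def by (intro sum.cong refl) auto
  thus "Gk n k d = Hel n k d + 2 * Oel n k d"
    unfolding Hel_def Oel_def by (simp add: distrib_right sum.distrib sum_distrib_left mult.assoc)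
qed

lemma conv_Pel_left:
  assumes n: "n > 0"
  shows "conv n (Pel n) v d = v ((d - 1) mod int n) + v (d mod int n)"
proof -
  have "conv n (Pel n) v d = conv n (dl n 1) v d + conv n (dl n 0) v d"
    unfolding Pel_def by (rule conv_add_left)
  thus ?thesis by (simp add: conv_dl_left[OF n])
qed

lemma conv_Pel_Hel:
  assumes n: "n > 0" and kodd: "odd k"
  shows "conv n (Pel n) (Hel n k) d = (dl n (int k) d + dl n 0 d :: 'a :: comm_ring_1)"
proof -
  have "conv n (Pel n) (Hel n k) d = (\<Sum>i<k. (-1) ^ i * (dl n (int (Suc i)) d + dl n (int i) d) :: 'a)"
    unfolding conv_Pel_left[OF n] Hel_def dl_shift dl_mod
    by (simp add: sum.distrib distrib_left add.commute dl_shift')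
  also have "\<dots> = dl n 0 d + dl n (int k) d"
    using alt_telescope[where m=k and f="\<lambda>i. dl n (int i) d :: 'a"] kodd by simp
  finally show ?thesis by (simp add: add.commute)
qed


definition Qel :: "nat \<Rightarrow> int \<Rightarrow> 'a::comm_ring_1" where
  "Qel n d = (-1) ^ nat (d mod int n)"

lemma conv_Pel_Qel:
  assumes n: "n > 0" and odd: "odd n"
  shows "conv n (Pel n) (Qel n) d = (2 * dl n 0 d :: 'a :: comm_ring_1)"
proof -
  have e: "(d - 1) mod int n = (d mod int n - 1) mod int n" by (simp add: mod_diff_left_eq)
  show ?thesis unfolding conv_Pel_left[OF n]
  proof (cases "d mod int n = 0")
    case True
    hence "(d - 1) mod int n = int n - 1" using n unfolding e by (simp add: zmod_minus1)
    moreover have "even (nat (int n - 1))" using odd n by (simp add: nat_diff_distrib)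
    ultimately have "Qel n ((d - 1) mod int n) = (1 :: 'a)" unfolding Qel_def mod_mod_trivial by simp
    thus "Qel n ((d - 1) mod int n) + Qel n (d mod int n) = (2 * dl n 0 d :: 'a)" using True by (simp add: dl_def Qel_def)
  next
    case False
    have r: "0 \<le> d mod int n" "d mod int n < int n" using n by auto
    hence e2: "(d mod int n - 1) mod int n = d mod int n - 1" using False by (intro mod_pos_pos_trivial) auto
    have "nat (d mod int n) = Suc (nat (d mod int n - 1))" using r False by simp
    thus "Qel n ((d - 1) mod int n) + Qel n (d mod int n) = (2 * dl n 0 d :: 'a)" using False e e2 by (simp add: dl_def Qel_def)
  qed
qed

lemma conv_Hel_Kel:
  assumes n: "n > 0" and odd: "odd n" and kodd: "odd k" and k'odd: "odd k'"
    and kk': "(int k * int k') mod int n = 1 mod int n"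
  shows "conv n (Hel n k) (Kel n k k') d = (dl n 0 d :: int)"
proof -
  define Z :: "int \<Rightarrow> int" where "Z = conv n (Hel n k) (Kel n k k')"
  have PH: "conv n (Pel n) (Hel n k) = (\<lambda>d. dl n (int k) d + dl n 0 d :: int)"
    by (rule ext, rule conv_Pel_Hel[OF n kodd])
  have PZ: "conv n (Pel n) Z = Pel n"
  proof (rule ext)
    fix d
    have "conv n (Pel n) Z d = conv n (conv n (Pel n) (Hel n k)) (Kel n k k') d"
      unfolding Z_def by (rule conv_assoc[OF n, symmetric])
    also have "\<dots> = Pel n d" unfolding PH by (rule conv_Pk_Kel[OF n k'odd kk'])
    finally show "conv n (Pel n) Z d = Pel n d" .
  qed
  have QP: "conv n (Qel n) (Pel n) = (\<lambda>d. 2 * dl n 0 d :: int)"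
    by (rule ext) (simp add: conv_comm[OF n, of "Qel n"] conv_Pel_Qel[OF n odd])
  have "conv n (Qel n) (conv n (Pel n) Z) d = conv n (conv n (Qel n) (Pel n)) Z d"
    by (rule conv_assoc[OF n, symmetric])
  hence "conv n (Qel n) (Pel n) d = conv n (\<lambda>d. 2 * dl n 0 d) Z d" unfolding PZ QP[symmetric] .
  hence "2 * dl n 0 d = 2 * Z (d mod int n)"
    unfolding QP by (simp add: conv_scale_left conv_dl_left[OF n])
  moreover have "Z (d mod int n) = Z d" unfolding Z_def by simp
  ultimately show ?thesis unfolding Z_def by simp
qed

definition Eel :: "nat \<Rightarrow> nat \<Rightarrow> nat \<Rightarrow> int \<Rightarrow> int" where
  "Eel n k k' = conv n (Oel n k) (Kel n k k')"

lemma V0_E: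
  assumes n: "n > 0" and odd: "odd n" and kodd: "odd k" and k'odd: "odd k'"
    and kk': "(int k * int k') mod int n = 1 mod int n"
  shows "V0 n k k' d = (dl n 0 d + 2 * Eel n k k' d :: int)"
proof -
  have "(V0 n k k' d :: int) = conv n (\<lambda>d. Hel n k d + 2 * Oel n k d) (Kel n k k') d"
    unfolding V0_def Gk_split ..
  also have "\<dots> = conv n (Hel n k) (Kel n k k') d + 2 * conv n (Oel n k) (Kel n k k') d"
    by (simp add: conv_add_left conv_scale_left)
  finally show ?thesis unfolding conv_Hel_Kel[OF n odd kodd k'odd kk'] Eel_def .
qed


lemma V0_expand:
  assumes n: "n > 0"
  shows "V0 n k k' d = (\<Sum>i<k. \<Sum>j<k'. (-1) ^ j * dl n (int k * int j + int i) d :: 'a :: comm_ring_1)"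
proof -
  have "V0 n k k' d = conv n (\<lambda>d. \<Sum>i<k. dl n (int i) d) (Kel n k k') d"
    unfolding V0_def Gk_def ..
  also have "\<dots> = (\<Sum>i<k. conv n (dl n (int i)) (Kel n k k') d :: 'a)"
    by (rule conv_sum_left)
  also have "\<dots> = (\<Sum>i<k. \<Sum>j<k'. (-1) ^ j * dl n (int k * int j + int i) d)"
    by (simp add: conv_dl_left[OF n] Kel_def dl_shift')
  finally show ?thesis .
qed

lemma dl_neg: "dl n a (- d) = dl n (- a) d"
proof -
  have "((- d) mod int n = a mod int n) = (d mod int n = (- a) mod int n)"
  proof -
    have "((- d) mod int n = a mod int n) = (int n dvd (- d - a))" by (rule mod_eq_dvd_iff)
    also have "\<dots> = (int n dvd (d - (- a)))"
    proof -
      have "- d - a = - (d - (- a))" by simp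
      thus ?thesis by (simp only: dvd_minus_iff)
    qed
    also have "\<dots> = (d mod int n = (- a) mod int n)" by (rule mod_eq_dvd_iff[symmetric])
    finally show ?thesis .
  qed
  thus ?thesis by (simp add: dl_def)
qed

lemma dl_cong: "a mod int n = a' mod int n \<Longrightarrow> dl n a d = dl n a' d"
  by (simp add: dl_def)

lemma sum_lessThan_rev: "(\<Sum>i<m. g i) = (\<Sum>i<m. g (m - Suc i))"
  using sum.atLeastLessThan_rev[of g 0 m] by (simp add: atLeast0LessThan)

lemma neg1_pow_rev:
  assumes "odd m" "j < m"
  shows "(-1) ^ (m - Suc j) = ((-1) ^ j :: 'a :: comm_ring_1)"
proof -
  have "even (m - Suc j) = even j" using assms by (auto simp: even_diff_nat)
  thus ?thesis by (simp add: minus_one_power_iff)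
qed

lemma V0_sym:
  assumes n: "n > 0" and k'odd: "odd k'" and kk': "(int k * int k') mod int n = 1 mod int n"
  shows "V0 n k k' (- d) = (V0 n k k' d :: 'a :: comm_ring_1)"
proof -
  have "V0 n k k' (- d) = (\<Sum>i<k. \<Sum>j<k'. (-1) ^ j * dl n (int k * int j + int i) (- d) :: 'a)"
    by (rule V0_expand[OF n])
  also have "\<dots> = (\<Sum>i<k. \<Sum>j<k'. (-1) ^ (k' - Suc j) * dl n (int k * int (k' - Suc j) + int (k - Suc i)) (- d))"
    by (subst sum_lessThan_rev, rule sum.cong[OF refl], subst sum_lessThan_rev, rule refl)
  also have "\<dots> = (\<Sum>i<k. \<Sum>j<k'. (-1) ^ j * dl n (int k * int j + int i) d)"
  proof (intro sum.cong refl)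
    fix i j assume i: "i \<in> {..<k}" and j: "j \<in> {..<k'}"
    have 1: "(-1) ^ (k' - Suc j) = ((-1) ^ j :: 'a)" using neg1_pow_rev[OF k'odd] j by simp
    have "int k * int (k' - Suc j) + int (k - Suc i) = (int k * int k' - 1) - (int k * int j + int i)"
      using i j by (simp add: of_nat_diff algebra_simps)
    hence "(- (int k * int (k' - Suc j) + int (k - Suc i))) mod int n
        = ((int k * int j + int i) - (int k * int k' - 1)) mod int n" by simp
    also have "\<dots> = ((int k * int j + int i) - (int k * int k' - 1) mod int n) mod int n"
      by (simp add: mod_diff_right_eq)
    also have "(int k * int k' - 1) mod int n = 0"
    proof -
      have "int n dvd int k * int k' - 1" using kk' mod_eq_dvd_iff by blast
      thus ?thesis by (simp add: dvd_eq_mod_eq_0)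
    qed
    finally have "(- (int k * int (k' - Suc j) + int (k - Suc i))) mod int n = (int k * int j + int i) mod int n"
      by simp
    hence 2: "dl n (int k * int (k' - Suc j) + int (k - Suc i)) (- d) = (dl n (int k * int j + int i) d :: 'a)"
      unfolding dl_neg by (rule dl_cong)
    show "(-1) ^ (k' - Suc j) * dl n (int k * int (k' - Suc j) + int (k - Suc i)) (- d) =
          ((-1) ^ j * dl n (int k * int j + int i) d :: 'a)" unfolding 1 2 ..
  qed
  also have "\<dots> = V0 n k k' d" by (rule V0_expand[OF n, symmetric])
  finally show ?thesis .
qed


lemma Eel_mod[simp]: "Eel n k k' (d mod int n) = Eel n k k' d"
  by (simp add: Eel_def)

lemma V0_mod[simp]: "V0 n k k' (d mod int n) = V0 n k k' d"
  by (simp add: V0_def)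

lemma E_sym:
  assumes n: "n > 0" and odd: "odd n" and kodd: "odd k" and k'odd: "odd k'"
    and kk': "(int k * int k') mod int n = 1 mod int n"
  shows "Eel n k k' (- d) = Eel n k k' d"
proof -
  have "dl n 0 (- d) + 2 * Eel n k k' (- d) = dl n 0 d + 2 * Eel n k k' d"
    using V0_sym[OF n k'odd kk', of d, where 'a=int] unfolding V0_E[OF n odd kodd k'odd kk'] .
  moreover have "dl n 0 (- d) = (dl n 0 d :: int)" by (simp add: dl_neg)
  ultimately show ?thesis by simp
qed

lemma sum_E:
  assumes n: "n > 0" and odd: "odd n" and kodd: "odd k" and k'odd: "odd k'"
    and kk': "(int k * int k') mod int n = 1 mod int n"
  shows "1 + 2 * (\<Sum>d<n. Eel n k k' (int d)) = int k"
proof -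
  have "int k = (\<Sum>d<n. V0 n k k' (int d))" using sum_V0[OF n k'odd, where 'a=int] by simp
  also have "\<dots> = (\<Sum>d<n. dl n 0 (int d)) + 2 * (\<Sum>d<n. Eel n k k' (int d))"
    unfolding V0_E[OF n odd kodd k'odd kk'] by (simp add: sum.distrib sum_distrib_left)
  finally show ?thesis using sum_dl[OF n, of 0, where 'a=int] by simp
qed

lemma E0_even:
  assumes n: "n > 0" and odd: "odd n" and kodd: "odd k" and k'odd: "odd k'"
    and kk': "(int k * int k') mod int n = 1 mod int n" and k4: "k mod 4 = 1"
  shows "even (Eel n k k' 0)"
proof -
  define h where "h = (n - 1) div 2"
  have nh: "n = 2 * h + 1" unfolding h_def using odd by presburger
  let ?E = "\<lambda>d. Eel n k k' (int d)"
  have dec: "{..<n} = insert 0 ({1..h} \<union> {h+1..<n})" using nh by auto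
  have "(\<Sum>d<n. ?E d) = ?E 0 + ((\<Sum>d\<in>{1..h}. ?E d) + (\<Sum>d\<in>{h+1..<n}. ?E d))"
    unfolding dec by (subst sum.insert) (auto intro: sum.union_disjoint)
  also have "(\<Sum>d\<in>{h+1..<n}. ?E d) = (\<Sum>d\<in>{1..h}. ?E (n - d))"
    by (rule sum.reindex_bij_witness[of _ "\<lambda>d. n - d" "\<lambda>d. n - d"]) (use nh in auto)
  also have "\<dots> = (\<Sum>d\<in>{1..h}. ?E d)"
  proof (rule sum.cong[OF refl])
    fix d assume d: "d \<in> {1..h}"
    have dn: "d < n" using d nh by auto
    have e: "int (n - d) mod int n = (- int d) mod int n" using dn by (simp add: of_nat_diff minus_mod_self1)
    have "Eel n k k' (int (n - d)) = Eel n k k' (- int d)" by (metis Eel_mod e)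
    also have "\<dots> = Eel n k k' (int d)" by (rule E_sym[OF n odd kodd k'odd kk'])
    finally show "?E (n - d) = ?E d" .
  qed
  finally have "(\<Sum>d<n. ?E d) = ?E 0 + 2 * (\<Sum>d\<in>{1..h}. ?E d)" by simp
  with sum_E[OF n odd kodd k'odd kk'] have "1 + 2 * (?E 0 + 2 * (\<Sum>d\<in>{1..h}. ?E d)) = int k" by simp
  moreover have "int k mod 4 = 1" using k4 by presburger
  moreover have "\<forall>a b. int k mod 4 = 1 \<longrightarrow> 1 + 2 * (a + 2 * b) = int k \<longrightarrow> even (a :: int)" by presburger
  ultimately have "even (Eel n k k' (int 0))" by blast
  thus ?thesis by simp
qed


definition Wel :: "nat \<Rightarrow> nat \<Rightarrow> nat \<Rightarrow> int \<Rightarrow> int \<Rightarrow> int" where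
  "Wel n k k' c d = (if d = 0 then Eel n k k' 0 div 2 + c
     else if d \<le> int ((n - 1) div 2) then Eel n k k' d + 2 * c else 0)"

lemma V_W:
  assumes n: "n > 0" and odd: "odd n" and kodd: "odd k" and k'odd: "odd k'"
    and kk': "(int k * int k') mod int n = 1 mod int n" and k4: "k mod 4 = 1"
  shows "V0 n k k' d + 4 * c = dl n 0 d + 2 * Wel n k k' c (d mod int n) + 2 * Wel n k k' c ((- d) mod int n)"
proof -
  define h where "h = (n - 1) div 2"
  have nh: "int n = 2 * int h + 1" unfolding h_def using odd by presburger
  define r where "r = d mod int n"
  have r: "0 \<le> r" "r < int n" using n by (auto simp: r_def)
  have V: "V0 n k k' d = dl n 0 r + 2 * Eel n k k' r"
    unfolding r_def V0_mod[symmetric, of n k k' d] by (rule V0_E[OF n odd kodd k'odd kk'])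
  have dl: "dl n 0 d = (dl n 0 r :: int)" unfolding r_def by simp
  have neg: "(- d) mod int n = (if r = 0 then 0 else int n - r)" unfolding r_def by (rule zmod_zminus1_eq_if)
  have ev: "even (Eel n k k' 0)" by (rule E0_even[OF n odd kodd k'odd kk' k4])
  have hh: "(n - Suc 0) div 2 = h" by (simp add: h_def)
  show ?thesis
  proof (cases "r = 0")
    case True
    have "dl n 0 r = (1 :: int)" using True by (simp add: dl_def)
    thus ?thesis using True V dl ev unfolding neg r_def[symmetric] by (simp add: Wel_def)
  next
    case False
    have dl0: "dl n 0 r = (0 :: int)" using False r by (simp add: dl_def)
    show ?thesis
    proof (cases "r \<le> int h")
      case True
      have "\<not> int n - r \<le> int (h)" using True nh by simp
      thus ?thesis using False True V dl dl0 unfolding neg r_def[symmetric] by (simp add: Wel_def hh)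
    next
      case F2: False
      have a: "int n - r \<le> int h" "int n - r \<noteq> 0" using F2 r nh by auto
      have "Eel n k k' (int n - r) = Eel n k k' ((- r) mod int n)"
        by (metis Eel_mod minus_mod_self1)
      also have "\<dots> = Eel n k k' r" by (simp add: E_sym[OF n odd kodd k'odd kk'])
      finally have e: "Eel n k k' (int n - r) = Eel n k k' r" .
      show ?thesis using False F2 a V dl dl0 e unfolding neg r_def[symmetric] by (simp add: Wel_def hh)
    qed
  qed
qed

lemma of_int_dl: "of_int (dl n a d) = dl n a d"
  by (simp add: dl_def)

lemma of_int_V0:
  assumes n: "n > 0"
  shows "of_int (V0 n k k' d :: int) = (V0 n k k' d :: 'a :: comm_ring_1)"
  unfolding V0_expand[OF n] by (simp add: of_int_dl)

lemma circ_final: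
  assumes n: "n > 0" and odd: "odd n" and kodd: "odd k" and k'odd: "odd k'"
    and kk': "(int k * int k') mod int n = 1 mod int n" and k4: "k mod 4 = 1"
    and kk: "(\<kappa> * int k) mod int n = 1 mod int n"
  shows "det (circ n (\<lambda>d. dl n 0 d + 2 * Wel n k k' c (d mod int n) + 2 * Wel n k k' c ((- d) mod int n)))
     = int k + 4 * c * int n"
proof -
  have k: "k > 0" using k4 by (cases k) auto
  have 1: "circ n (\<lambda>d. dl n 0 d + 2 * Wel n k k' c (d mod int n) + 2 * Wel n k k' c ((- d) mod int n))
      = circ n (\<lambda>d. V0 n k k' d + 4 * c)"
    by (rule circ_cong) (simp add: V_W[OF n odd kodd k'odd kk' k4])
  have "map_mat (of_int :: int \<Rightarrow> rat) (circ n (\<lambda>d. V0 n k k' d + 4 * c)) = circ n (\<lambda>d. V0 n k k' d + of_int (4 * c))"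
    by (rule eq_matI) (auto simp: circ_def of_int_V0[OF n])
  hence "of_int (det (circ n (\<lambda>d. V0 n k k' d + 4 * c))) = (det (circ n (\<lambda>d. V0 n k k' d + of_int (4 * c))) :: rat)"
    by (metis of_int_hom.hom_det)
  also have "\<dots> = of_nat k + of_int (4 * c) * of_nat n"
    by (rule det_circ_V0_shift[OF n odd k'odd kk' kk k])
  finally have "of_int (det (circ n (\<lambda>d. V0 n k k' d + 4 * c))) = (of_int (int k + 4 * c * int n) :: rat)"
    by simp
  hence "det (circ n (\<lambda>d. V0 n k k' d + 4 * c)) = int k + 4 * c * int n" by (simp only: of_int_eq_iff)
  thus ?thesis unfolding 1 .
qed

lemma dic_carrier: "carrier (dicyclic n) = {0..<2 * int n} \<times> {0, 1}"
  by (simp add: dicyclic_def)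

lemma dic_mult: "x \<otimes>\<^bsub>dicyclic n\<^esub> y = dicyclic_mult n x y"
  by (simp add: dicyclic_def)

lemma dic_one: "\<one>\<^bsub>dicyclic n\<^esub> = (0, 0)"
  by (simp add: dicyclic_def)

lemma dm0: "dicyclic_mult n (a, 0) (c, d) = ((a + c) mod (2 * int n), d)"
  by (simp add: dicyclic_mult_def)

lemma dm10: "dicyclic_mult n (a, 1) (c, 0) = ((a - c) mod (2 * int n), 1)"
  by (simp add: dicyclic_mult_def)

lemma dm11: "dicyclic_mult n (a, 1) (c, 1) = ((a - c + int n) mod (2 * int n), 0)"
  by (simp add: dicyclic_mult_def)

lemma mod_in_diff: "(u + x mod (N::int) - v) mod N = (u + x - v) mod N"
  by (metis mod_add_right_eq mod_diff_left_eq)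

lemma mod_in_diff2: "(u - x mod (N::int) + v) mod N = (u - x + v) mod N"
  by (metis mod_add_left_eq mod_diff_right_eq)

lemma mod_in_diff3: "(x mod (N::int) - u + v) mod N = (x - u + v) mod N"
  by (metis mod_add_left_eq mod_diff_left_eq)

lemma dic_assoc:
  assumes "b \<in> {0,1}" "d \<in> {0,1}" "f \<in> {0,1}"
  shows "dicyclic_mult n (dicyclic_mult n (a, b) (c, d)) (e, f) = dicyclic_mult n (a, b) (dicyclic_mult n (c, d) (e, f))"
  using assms by (auto simp: dicyclic_mult_def mod_simps algebra_simps mod_in_diff) (simp_all add: mod_eq_dvd_iff algebra_simps)


definition dinv :: "nat \<Rightarrow> int \<times> int \<Rightarrow> int \<times> int" where
  "dinv n x = (if snd x = 0 then ((- fst x) mod (2 * int n), 0) else ((fst x + int n) mod (2 * int n), 1))"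

lemma mod_unique_lt:
  assumes "0 \<le> c" "c < (N::int)" "c mod N = y mod N"
  shows "c = y mod N"
  using assms by simp

lemma dic_inv:
  assumes n: "n > 0" and x: "x \<in> carrier (dicyclic n)"
  shows "inv\<^bsub>dicyclic n\<^esub> x = dinv n x"
proof -
  obtain a b where ab: "x = (a, b)" "0 \<le> a" "a < 2 * int n" "b = 0 \<or> b = 1"
    using x by (auto simp: dic_carrier)
  let ?G = "dicyclic n"
  let ?P = "\<lambda>y. y \<in> carrier ?G \<and> x \<otimes>\<^bsub>?G\<^esub> y = \<one>\<^bsub>?G\<^esub> \<and> y \<otimes>\<^bsub>?G\<^esub> x = \<one>\<^bsub>?G\<^esub>"
  have P: "?P (dinv n x)"
    using ab n by (auto simp: dinv_def dic_carrier dic_mult dic_one dicyclic_mult_def mod_simps mod_in_diff2 mod_in_diff3)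
  have U: "y = dinv n x" if Py: "?P y" for y
  proof -
    obtain c d where cd: "y = (c, d)" "0 \<le> c" "c < 2 * int n" "d = 0 \<or> d = 1"
      using Py by (auto simp: dic_carrier)
    have m: "dicyclic_mult n (a, b) (c, d) = (0, 0)" using Py ab cd by (simp add: dic_mult dic_one)
    show ?thesis
    proof (cases "b = 0")
      case True
      hence "d = 0" "(a + c) mod (2 * int n) = 0" using m by (auto simp: dicyclic_mult_def)
      hence "c mod (2 * int n) = (- a) mod (2 * int n)" by (simp add: mod_eq_dvd_iff dvd_eq_mod_eq_0[symmetric] algebra_simps)
      hence "c = (- a) mod (2 * int n)" using cd by simp
      thus ?thesis using True \<open>d = 0\<close> ab cd by (simp add: dinv_def)
    next
      case False
      hence b1: "b = 1" using ab by simp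
      have "d = 1" using m b1 cd by (auto simp: dicyclic_mult_def)
      hence "(a - c + int n) mod (2 * int n) = 0" using m b1 by (simp add: dicyclic_mult_def)
      hence "2 * int n dvd a - c + int n" by (simp add: dvd_eq_mod_eq_0)
      hence "2 * int n dvd c - (a + int n)" by (metis dvd_minus_iff minus_diff_eq diff_diff_eq2 diff_add_eq)
      hence "c mod (2 * int n) = (a + int n) mod (2 * int n)" by (simp add: mod_eq_dvd_iff)
      hence "c = (a + int n) mod (2 * int n)" using cd by simp
      thus ?thesis using b1 \<open>d = 1\<close> ab cd by (simp add: dinv_def)
    qed
  qed
  show ?thesis unfolding m_inv_def by (rule the_equality[where P = ?P, OF P U])
qed


lemma mod2n_n: "(x mod (2 * int n)) mod int n = x mod int n"
  by (simp add: mod_mod_cancel)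

lemma mm_add: "(a + b mod (2 * int n)) mod int n = (a + b) mod int n"
  by (metis mod2n_n mod_add_right_eq)

lemma mm_diff: "(a - b mod (2 * int n)) mod int n = (a - b) mod int n"
  by (metis mod2n_n mod_diff_right_eq)

lemma mm_diff_add: "(a - b mod (2 * int n) + c) mod int n = (a - b + c) mod int n"
  by (metis mm_diff mod_add_left_eq)

definition cc :: "int \<times> int \<Rightarrow> int" where
  "cc h = (if snd h = 0 then fst h else - fst h)"

definition sg :: "int \<times> int \<Rightarrow> int" where
  "sg g = (if snd g = 0 then -1 else 1)"

lemma div_fst:
  assumes g: "snd g \<in> {0,1}" and h: "snd h \<in> {0,1}"
  shows "fst (dicyclic_mult n g (dinv n h)) mod int n = (fst g + sg g * cc h) mod int n"
proof -
  obtain a b a' b' where gh: "g = (a,b)" "h = (a',b')" by (cases g, cases h)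
  show ?thesis using g h unfolding gh
    by (auto simp: dicyclic_mult_def dinv_def sg_def cc_def mod2n_n mm_add mm_diff mm_diff_add)
      (simp_all add: mod_eq_dvd_iff algebra_simps)
qed

lemma div_one:
  assumes g: "g \<in> carrier (dicyclic n)" and h: "h \<in> carrier (dicyclic n)"
  shows "(dicyclic_mult n g (dinv n h) = (0,0)) = (g = h)"
proof -
  obtain a b a' b' where gh: "g = (a,b)" "h = (a',b')" by (cases g, cases h)
  have r: "0 \<le> a" "a < 2 * int n" "0 \<le> a'" "a' < 2 * int n" "b \<in> {0,1}" "b' \<in> {0,1}"
    using g h unfolding gh by (auto simp: dic_carrier)
  show ?thesis
  proof
    assume h0: "dicyclic_mult n g (dinv n h) = (0,0)"
    have bb: "b = b'" using h0 r unfolding gh by (auto simp: dicyclic_mult_def dinv_def split: if_splits)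
    have "(a - a') mod (2 * int n) = 0"
    proof (cases "b = 0")
      case True thus ?thesis using h0 bb unfolding gh by (simp add: dicyclic_mult_def dinv_def mod_simps)
    next
      case False
      hence "b = 1" "b' = 1" using r bb by auto
      thus ?thesis using h0 unfolding gh by (simp add: dicyclic_mult_def dinv_def mod_in_diff2)
    qed
    hence "a mod (2 * int n) = a' mod (2 * int n)" by (simp add: mod_eq_dvd_iff dvd_eq_mod_eq_0)
    hence "a = a'" using r by simp
    thus "g = h" using bb gh by simp
  next
    assume "g = h"
    thus "dicyclic_mult n g (dinv n h) = (0,0)" using r unfolding gh
      by (auto simp: dicyclic_mult_def dinv_def mod_simps mod_in_diff2)
  qed
qed


definition enum :: "nat \<Rightarrow> nat \<Rightarrow> int \<times> int" where
  "enum n q = (let j = int (q div 4) in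
     if q mod 4 = 0 then (j, 0) else if q mod 4 = 1 then (int n - j, 1)
     else if q mod 4 = 2 then (int n + j, 0) else ((- j) mod (2 * int n), 1))"

definition dec :: "nat \<Rightarrow> int \<times> int \<Rightarrow> nat" where
  "dec n x = (if snd x = 0 then (if fst x < int n then 4 * nat (fst x) else 4 * nat (fst x - int n) + 2)
     else (if fst x = 0 then 3 else if fst x \<le> int n then 4 * nat (int n - fst x) + 1
       else 4 * nat (2 * int n - fst x) + 3))"

lemma q_cases:
  fixes q :: nat
  obtains "q mod 4 = 0" | "q mod 4 = 1" | "q mod 4 = 2" | "q mod 4 = 3"
  by linarith

lemma enum_carrier:
  assumes q: "q < 4 * n"
  shows "enum n q \<in> carrier (dicyclic n)"
proof -
  have j: "int (q div 4) < int n" using q by auto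
  show ?thesis
    by (cases q rule: q_cases) (use j in \<open>auto simp: enum_def Let_def dic_carrier\<close>)
qed

lemma dec_enum:
  assumes q: "q < 4 * n"
  shows "dec n (enum n q) = q"
proof -
  have j: "int (q div 4) < int n" using q by auto
  have "dec n (enum n q) = 4 * (q div 4) + q mod 4"
  proof (cases q rule: q_cases)
    case 1 thus ?thesis using j by (simp add: enum_def dec_def Let_def)
  next
    case 2
    have "nat (int n - (int n - int (q div 4))) = q div 4" by simp
    thus ?thesis using 2 j by (simp add: enum_def dec_def Let_def)
  next
    case 3 thus ?thesis using j by (simp add: enum_def dec_def Let_def)
  next
    case 4
    show ?thesis
    proof (cases "q div 4 = 0")
      case True thus ?thesis using 4 by (simp add: enum_def dec_def Let_def)
    next
      case False
      hence "(- int (q div 4)) mod (2 * int n) = 2 * int n - int (q div 4)"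
        using j by (simp add: zmod_zminus1_eq_if)
      thus ?thesis using 4 j False by (simp add: enum_def dec_def Let_def)
    qed
  qed
  thus ?thesis by simp
qed

lemma card_dic: "card (carrier (dicyclic n)) = 4 * n"
  by (simp add: dic_carrier card_cartesian_product)

lemma enum_bij:
  assumes n: "n > 0"
  shows "bij_betw (enum n) {0..<4*n} (carrier (dicyclic n))"
proof -
  have inj: "inj_on (enum n) {0..<4*n}"
    by (rule inj_on_inverseI[of _ "dec n"]) (simp add: dec_enum)
  have sub: "enum n ` {0..<4*n} \<subseteq> carrier (dicyclic n)" using enum_carrier by auto
  have "card (enum n ` {0..<4*n}) = card (carrier (dicyclic n))"
    using card_image[OF inj] card_dic by simp
  hence "enum n ` {0..<4*n} = carrier (dicyclic n)"
    using sub by (intro card_subset_eq) (auto simp: dic_carrier)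
  thus ?thesis using inj by (simp add: bij_betw_def)
qed

lemma cc_enum:
  assumes q: "q < 4 * n"
  shows "cc (enum n q) mod int n = int (q div 4)"
proof -
  have j: "int (q div 4) < int n" using q by auto
  show ?thesis
  proof (cases q rule: q_cases)
    case 4
    have "(- ((- int (q div 4)) mod (2 * int n))) mod int n = (- (- int (q div 4))) mod int n"
      by (metis mod2n_n mod_minus_eq)
    thus ?thesis using 4 j by (simp add: enum_def cc_def Let_def)
  qed (use j in \<open>auto simp: enum_def cc_def Let_def mod_eq_dvd_iff\<close>)
qed


lemma leibniz_transfer:
  fixes F :: "'b \<Rightarrow> 'b \<Rightarrow> int"
  assumes bij: "bij_betw e {0..<N} S"
  shows "(\<Sum>\<sigma> | \<sigma> permutes S. sign \<sigma> * (\<Prod>g\<in>S. F g (\<sigma> g)))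
       = det (mat N N (\<lambda>(p,q). F (e p) (e q)))"
proof -
  let ?A = "{0..<N}"
  let ?e' = "inv_into ?A e"
  have inj: "inj_on e ?A" using bij by (simp add: bij_betw_def)
  have bij': "bij_betw ?e' S ?A" by (rule bij_betw_inv_into[OF bij])
  have finA: "finite ?A" by simp
  have ee': "e (?e' x) = x" if "x \<in> S" for x using bij that by (simp add: bij_betw_inv_into_right)
  have e'e: "?e' (e x) = x" if "x \<in> ?A" for x using inj that by (simp add: inv_into_f_f)
  have "det (mat N N (\<lambda>(p,q). F (e p) (e q)))
      = (\<Sum>\<pi> | \<pi> permutes ?A. of_int (sign \<pi>) * (\<Prod>p = 0..<N. F (e p) (e (\<pi> p))))"
    by (subst det_def'[of _ N]) (auto intro!: sum.cong prod.cong simp: permutes_in_image)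
  also have "\<dots> = (\<Sum>\<sigma> | \<sigma> permutes S. sign \<sigma> * (\<Prod>g\<in>S. F g (\<sigma> g)))"
  proof (rule sum.reindex_bij_witness[of _ "map_permutation S ?e'" "map_permutation ?A e"])
    fix \<pi> assume "\<pi> \<in> {\<pi>. \<pi> permutes ?A}"
    hence \<pi>: "\<pi> permutes ?A" by simp
    show "map_permutation S ?e' (map_permutation ?A e \<pi>) = \<pi>"
      by (rule map_permutation_compose_inv[OF bij \<pi>]) (simp add: e'e)
    show "map_permutation ?A e \<pi> \<in> {\<sigma>. \<sigma> permutes S}"
      using map_permutation_permutes[OF bij \<pi>] by simp
    define \<sigma> where "\<sigma> = map_permutation ?A e \<pi>"
    have sg: "sign \<sigma> = sign \<pi>" unfolding \<sigma>_def by (rule sign_map_permutation[OF inj \<pi> finA])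
    have "(\<Prod>g\<in>S. F g (\<sigma> g)) = (\<Prod>p\<in>?A. F (e p) (\<sigma> (e p)))"
      using prod.reindex_bij_betw[OF bij, of "\<lambda>g. F g (\<sigma> g)"] by simp
    also have "\<dots> = (\<Prod>p\<in>?A. F (e p) (e (\<pi> p)))"
      by (intro prod.cong refl) (simp add: \<sigma>_def map_permutation_apply[OF inj])
    finally show "sign (map_permutation ?A e \<pi>) * (\<Prod>g\<in>S. F g (map_permutation ?A e \<pi> g))
        = of_int (sign \<pi>) * (\<Prod>p = 0..<N. F (e p) (e (\<pi> p)))"
      using sg unfolding \<sigma>_def by simp
  next
    fix \<sigma> assume "\<sigma> \<in> {\<sigma>. \<sigma> permutes S}"
    hence \<sigma>: "\<sigma> permutes S" by simp
    show "map_permutation ?A e (map_permutation S ?e' \<sigma>) = \<sigma>"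
      by (rule map_permutation_compose_inv[OF bij' \<sigma>]) (simp add: ee')
    show "map_permutation S ?e' \<sigma> \<in> {\<pi>. \<pi> permutes ?A}"
      using map_permutation_permutes[OF bij' \<sigma>] by simp
  qed
  finally show ?thesis ..
qed

lemma group_det_mat:
  assumes n: "n > 0"
  shows "group_det (dicyclic n) f = det (mat (4*n) (4*n) (\<lambda>(p,q). f (dicyclic_mult n (enum n p) (dinv n (enum n q)))))"
proof -
  have "group_det (dicyclic n) f = (\<Sum>\<sigma> | \<sigma> permutes carrier (dicyclic n). sign \<sigma> *
      (\<Prod>g\<in>carrier (dicyclic n). (\<lambda>g h. f (dicyclic_mult n g (dinv n h))) g (\<sigma> g)))"
    unfolding group_det_def
    by (intro sum.cong refl arg_cong2[where f="(*)"] prod.cong) (auto simp: dic_mult dic_inv[OF n] permutes_in_image)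
  also have "\<dots> = det (mat (4*n) (4*n) (\<lambda>(p,q). f (dicyclic_mult n (enum n p) (dinv n (enum n q)))))"
    by (rule leibniz_transfer[OF enum_bij[OF n]])
  finally show ?thesis .
qed


definition fW :: "nat \<Rightarrow> (int \<Rightarrow> int) \<Rightarrow> int \<times> int \<Rightarrow> int" where
  "fW n W u = (if u = (0, 0) then 1 else 0) + W (fst u mod int n)"

definition Xm :: "nat \<Rightarrow> (int \<Rightarrow> int) \<Rightarrow> int mat" where
  "Xm n W = mat (4*n) n (\<lambda>(p,l). W ((fst (enum n p) + sg (enum n p) * int l) mod int n))"

definition Ym :: "nat \<Rightarrow> int mat" where
  "Ym n = mat n (4*n) (\<lambda>(l,q). if l = q div 4 then 1 else 0)"

lemma sum_block4:
  fixes l n :: nat and g :: "nat \<Rightarrow> int"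
  assumes l: "l < n"
  shows "(\<Sum>q\<in>{0..<4*n}. (if l = q div 4 then 1 else 0) * g q) = g (4*l) + g (4*l+1) + g (4*l+2) + (g (4*l+3) :: int)"
proof -
  have "(\<Sum>q\<in>{0..<4*n}. (if l = q div 4 then 1 else 0) * g q) = (\<Sum>q\<in>{0..<4*n}. if l = q div 4 then g q else 0)"
    by (intro sum.cong) auto
  also have "\<dots> = (\<Sum>q\<in>{q\<in>{0..<4*n}. l = q div 4}. g q)"
    by (rule sum.inter_filter[symmetric]) simp
  also have "{q\<in>{0..<4*n}. l = q div 4} = {4*l, 4*l+1, 4*l+2, 4*l+3}"
    using l by auto
  finally show ?thesis by (simp add: ac_simps)
qed

lemma mat_eq_IXY:
  assumes n: "n > 0"
  shows "mat (4*n) (4*n) (\<lambda>(p,q). fW n W (dicyclic_mult n (enum n p) (dinv n (enum n q))))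
     = 1\<^sub>m (4*n) + Xm n W * Ym n"
proof (rule eq_matI)
  fix p q assume "p < dim_row (1\<^sub>m (4*n) + Xm n W * Ym n)" "q < dim_col (1\<^sub>m (4*n) + Xm n W * Ym n)"
  hence p: "p < 4*n" and q: "q < 4*n" by (auto simp: Ym_def Xm_def)
  have qd: "q div 4 < n" using q by auto
  have XY: "(Xm n W * Ym n) $$ (p,q) = W ((fst (enum n p) + sg (enum n p) * int (q div 4)) mod int n)"
  proof -
    have "(Xm n W * Ym n) $$ (p,q) = (\<Sum>l\<in>{0..<n}. W ((fst (enum n p) + sg (enum n p) * int l) mod int n) * (if l = q div 4 then 1 else 0))"
      using p q by (simp add: Xm_def Ym_def scalar_prod_def)
    also have "\<dots> = (\<Sum>l\<in>{0..<n}. if l = q div 4 then W ((fst (enum n p) + sg (enum n p) * int l) mod int n) else 0)"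
      by (intro sum.cong) auto
    also have "\<dots> = W ((fst (enum n p) + sg (enum n p) * int (q div 4)) mod int n)"
      using qd by simp
    finally show ?thesis .
  qed
  have cp: "enum n p \<in> carrier (dicyclic n)" and cq: "enum n q \<in> carrier (dicyclic n)"
    using enum_carrier p q by auto
  have snd: "snd (enum n p) \<in> {0,1}" "snd (enum n q) \<in> {0,1}" using cp cq by (auto simp: dic_carrier)
  have one: "(dicyclic_mult n (enum n p) (dinv n (enum n q)) = (0,0)) = (p = q)"
    unfolding div_one[OF cp cq] using inj_onD[OF bij_betw_imp_inj_on[OF enum_bij[OF n]]] p q by auto
  have "fst (dicyclic_mult n (enum n p) (dinv n (enum n q))) mod int n
      = (fst (enum n p) + sg (enum n p) * cc (enum n q)) mod int n"
    by (rule div_fst[OF snd])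
  also have "\<dots> = (fst (enum n p) + sg (enum n p) * (cc (enum n q) mod int n)) mod int n"
    by (metis mod_add_right_eq mod_mult_right_eq)
  also have "\<dots> = (fst (enum n p) + sg (enum n p) * int (q div 4)) mod int n"
    unfolding cc_enum[OF q] ..
  finally have fst: "fst (dicyclic_mult n (enum n p) (dinv n (enum n q))) mod int n = (fst (enum n p) + sg (enum n p) * int (q div 4)) mod int n" .
  show "mat (4*n) (4*n) (\<lambda>(p,q). fW n W (dicyclic_mult n (enum n p) (dinv n (enum n q)))) $$ (p, q)
      = (1\<^sub>m (4*n) + Xm n W * Ym n) $$ (p, q)"
    using p q XY one fst by (simp add: fW_def Xm_def Ym_def)
qed (auto simp: Xm_def Ym_def)


lemma enum_4: "enum n (4*l) = (int l, 0)" "enum n (4*l+1) = (int n - int l, 1)"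
  "enum n (4*l+2) = (int n + int l, 0)" "enum n (4*l+3) = ((- int l) mod (2 * int n), 1)"
proof -
  have a: "(4*l) mod 4 = 0" "(4*l) div 4 = l" "(4*l+1) mod 4 = 1" "(4*l+1) div 4 = l"
    "(4*l+2) mod 4 = 2" "(4*l+2) div 4 = l" "(4*l+3) mod 4 = 3" "(4*l+3) div 4 = l" by presburger+
  show "enum n (4*l) = (int l, 0)" "enum n (4*l+1) = (int n - int l, 1)"
    "enum n (4*l+2) = (int n + int l, 0)" "enum n (4*l+3) = ((- int l) mod (2 * int n), 1)"
    unfolding enum_def Let_def a by simp_all
qed

lemma YX_circ:
  assumes n: "n > 0"
  shows "1\<^sub>m n + Ym n * Xm n W = circ n (\<lambda>d. dl n 0 d + 2 * W (d mod int n) + 2 * W ((- d) mod int n))"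
proof (rule eq_matI)
  fix l l' assume "l < dim_row (circ n (\<lambda>d. dl n 0 d + 2 * W (d mod int n) + 2 * W ((- d) mod int n)))"
    "l' < dim_col (circ n (\<lambda>d. dl n 0 d + 2 * W (d mod int n) + 2 * W ((- d) mod int n)))"
  hence l: "l < n" and l': "l' < n" by (auto simp: circ_def)
  let ?X = "\<lambda>q. W ((fst (enum n q) + sg (enum n q) * int l') mod int n)"
  have "(Ym n * Xm n W) $$ (l,l') = (\<Sum>q\<in>{0..<4*n}. (if l = q div 4 then 1 else 0) * ?X q)"
    using l l' by (simp add: Xm_def Ym_def scalar_prod_def)
  also have "\<dots> = ?X (4*l) + ?X (4*l+1) + ?X (4*l+2) + ?X (4*l+3)"
    by (rule sum_block4[OF l])
  also have "\<dots> = 2 * W ((int l - int l') mod int n) + 2 * W ((int l' - int l) mod int n)"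
  proof -
    have 1: "(int n - int l + int l') mod int n = (int l' - int l) mod int n" by (simp add: mod_eq_dvd_iff)
    have 2: "(int n + int l - int l') mod int n = (int l - int l') mod int n" by (simp add: mod_eq_dvd_iff)
    have 3: "((- int l) mod (2 * int n) + int l') mod int n = (int l' - int l) mod int n"
      using mm_add[of "int l'" "- int l" n] by (simp add: add.commute)
    show ?thesis unfolding enum_4 by (simp add: sg_def 1 2 3)
  qed
  finally have YX: "(Ym n * Xm n W) $$ (l,l') = 2 * W ((int l - int l') mod int n) + 2 * W ((int l' - int l) mod int n)" .
  have d: "dl n 0 ((int l - int l') mod int n) = (if l = l' then 1 else (0::int))"
    using mod_diff_zero_iff[OF l l'] by (simp add: dl_def)
  have m: "(- ((int l - int l') mod int n)) mod int n = (int l' - int l) mod int n"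
    by (simp add: mod_minus_eq)
  show "(1\<^sub>m n + Ym n * Xm n W) $$ (l, l') = circ n (\<lambda>d. dl n 0 d + 2 * W (d mod int n) + 2 * W ((- d) mod int n)) $$ (l, l')"
    using l l' YX d m by (simp add: circ_def Xm_def Ym_def)
qed (auto simp: circ_def Ym_def Xm_def)


lemma group_det_fW:
  assumes n: "n > 0"
  shows "group_det (dicyclic n) (fW n W) = det (circ n (\<lambda>d. dl n 0 d + 2 * W (d mod int n) + 2 * W ((- d) mod int n)))"
proof -
  have X: "Xm n W \<in> carrier_mat (4*n) n" and Y: "Ym n \<in> carrier_mat n (4*n)" by (auto simp: Xm_def Ym_def)
  show ?thesis
    unfolding group_det_mat[OF n] mat_eq_IXY[OF n] sylvester_det[OF X Y] YX_circ[OF n] ..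
qed

definition rot :: "nat \<Rightarrow> nat \<Rightarrow> nat" where
  "rot N x = (if x < 4*N then 4*(x div 4) + (x mod 4 + 1) mod 4 else x)"

lemma rot_Suc:
  "rot (Suc N) = rot N \<circ> (Transposition.transpose (4*N) (4*N+1) \<circ> Transposition.transpose (4*N+1) (4*N+2) \<circ> Transposition.transpose (4*N+2) (4*N+3))"
proof (rule ext)
  fix x
  consider "x < 4*N" | "x = 4*N" | "x = 4*N+1" | "x = 4*N+2" | "x = 4*N+3" | "x \<ge> 4*N+4" by linarith
  thus "rot (Suc N) x = (rot N \<circ> (Transposition.transpose (4*N) (4*N+1) \<circ> Transposition.transpose (4*N+1) (4*N+2) \<circ> Transposition.transpose (4*N+2) (4*N+3))) x"
  proof cases
    case 1 thus ?thesis by (simp add: rot_def Transposition.transpose_def)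
  next
    case 2
    have d: "x div 4 = N" "x mod 4 = 0" "x < 4 * Suc N" using 2 by presburger+
    have L: "rot (Suc N) x = 4*N + (0 + 1) mod 4" using d unfolding rot_def by simp
    have R: "(rot N \<circ> (Transposition.transpose (4*N) (4*N+1) \<circ> Transposition.transpose (4*N+1) (4*N+2) \<circ> Transposition.transpose (4*N+2) (4*N+3))) x = 4*N + (0 + 1) mod 4"
      using 2 by (simp add: rot_def Transposition.transpose_def)
    show ?thesis using L R by simp
  next
    case 3
    have d: "x div 4 = N" "x mod 4 = 1" "x < 4 * Suc N" using 3 by presburger+
    have L: "rot (Suc N) x = 4*N + (1 + 1) mod 4" using d unfolding rot_def by simp
    have R: "(rot N \<circ> (Transposition.transpose (4*N) (4*N+1) \<circ> Transposition.transpose (4*N+1) (4*N+2) \<circ> Transposition.transpose (4*N+2) (4*N+3))) x = 4*N + (1 + 1) mod 4"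
      using 3 by (simp add: rot_def Transposition.transpose_def)
    show ?thesis using L R by simp
  next
    case 4
    have d: "x div 4 = N" "x mod 4 = 2" "x < 4 * Suc N" using 4 by presburger+
    have L: "rot (Suc N) x = 4*N + (2 + 1) mod 4" using d unfolding rot_def by simp
    have R: "(rot N \<circ> (Transposition.transpose (4*N) (4*N+1) \<circ> Transposition.transpose (4*N+1) (4*N+2) \<circ> Transposition.transpose (4*N+2) (4*N+3))) x = 4*N + (2 + 1) mod 4"
      using 4 by (simp add: rot_def Transposition.transpose_def)
    show ?thesis using L R by simp
  next
    case 5
    have d: "x div 4 = N" "x mod 4 = 3" "x < 4 * Suc N" using 5 by presburger+
    have L: "rot (Suc N) x = 4*N + (3 + 1) mod 4" using d unfolding rot_def by simp
    have R: "(rot N \<circ> (Transposition.transpose (4*N) (4*N+1) \<circ> Transposition.transpose (4*N+1) (4*N+2) \<circ> Transposition.transpose (4*N+2) (4*N+3))) x = 4*N + (3 + 1) mod 4"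
      using 5 by (simp add: rot_def Transposition.transpose_def)
    show ?thesis using L R by simp
  next
    case 6 thus ?thesis by (simp add: rot_def Transposition.transpose_def)
  qed
qed

lemma rot_perm: "rot N permutes {0..<4*N} \<and> sign (rot N) = (-1) ^ N"
proof (induction N)
  case 0
  have "rot 0 = id" by (rule ext) (simp add: rot_def)
  moreover have "id permutes {0..<4*0}" by (rule permutes_id)
  ultimately show ?case by (simp add: id_def)
next
  case (Suc N)
  let ?A = "{0..<4 * Suc N}"
  let ?t1 = "Transposition.transpose (4*N) (4*N+1)" and ?t2 = "Transposition.transpose (4*N+1) (4*N+2)"
    and ?t3 = "Transposition.transpose (4*N+2) (4*N+3)"
  have p1: "?t1 permutes ?A" "?t2 permutes ?A" "?t3 permutes ?A" by (auto intro!: permutes_swap_id)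
  have pr: "rot N permutes ?A" using Suc.IH by (auto intro: permutes_subset)
  have perm: "rot (Suc N) permutes ?A" unfolding rot_Suc
    by (intro permutes_compose p1 pr)
  have pp: "permutation ?t1" "permutation ?t2" "permutation ?t3" "permutation (rot N)"
    using p1 pr by (auto intro: permutes_imp_permutation)
  have "sign (rot (Suc N)) = sign (rot N) * (sign ?t1 * (sign ?t2 * sign ?t3))"
    unfolding rot_Suc using pp
    by (simp add: sign_compose permutation_compose)
  also have "\<dots> = (-1) ^ Suc N" using Suc.IH by (simp add: sign_swap_id)
  finally show ?case using perm by simp
qed


lemma enum_rot:
  assumes q: "q < 4*n"
  shows "dicyclic_mult n (int n, 1) (enum n q) = enum n (rot n q)"
proof -
  define l where "l = q div 4"
  have l: "l < n" using q by (simp add: l_def)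
  have eq: "enum n q = (if q mod 4 = 0 then (int l, 0) else if q mod 4 = 1 then (int n - int l, 1)
     else if q mod 4 = 2 then (int n + int l, 0) else ((- int l) mod (2 * int n), 1))"
    by (simp add: enum_def Let_def l_def)
  have r: "rot n q = 4 * l + (q mod 4 + 1) mod 4" using q by (simp add: rot_def l_def)
  show ?thesis
  proof (cases q rule: q_cases)
    case 1
    have rq: "rot n q = 4*l+1" using r 1 by simp
    have "((int n - int l) mod (2 * int n)) = int n - int l" using l by (intro mod_pos_pos_trivial) auto
    thus ?thesis using 1 unfolding eq rq enum_4 by (simp add: dicyclic_mult_def)
  next
    case 2
    have rq: "rot n q = 4*l+2" using r 2 by simp
    have "(int n + int l) mod (2 * int n) = int n + int l" using l by (intro mod_pos_pos_trivial) auto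
    moreover have "(int l + int n) mod (2 * int n) = int n + int l" using l by (subst mod_pos_pos_trivial) auto
    ultimately show ?thesis using 2 unfolding eq rq enum_4 by (simp add: dicyclic_mult_def)
  next
    case 3
    have rq: "rot n q = 4*l+3" using r 3 by simp
    have "(int n - (int n + int l)) mod (2 * int n) = (- int l) mod (2 * int n)" by simp
    thus ?thesis using 3 unfolding eq rq enum_4 by (simp add: dicyclic_mult_def)
  next
    case 4
    have "(int n - (- int l) mod (2 * int n) + int n) mod (2 * int n) = (int n - (- int l) + int n) mod (2 * int n)"
      by (rule mod_in_diff2)
    also have "\<dots> = (int l + 2 * int n) mod (2 * int n)" by (simp add: algebra_simps)
    also have "\<dots> = int l" using l by simp
    finally have e: "(int n - (- int l) mod (2 * int n) + int n) mod (2 * int n) = int l" .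
    have rq: "rot n q = 4 * l" using r 4 by simp
    show ?thesis using 4 e unfolding eq rq enum_4 by (simp add: dicyclic_mult_def)
  qed
qed

definition fW' :: "nat \<Rightarrow> (int \<Rightarrow> int) \<Rightarrow> int \<times> int \<Rightarrow> int" where
  "fW' n W u = fW n W (dicyclic_mult n (int n, 1) u)"

lemma group_det_fW':
  assumes n: "n > 0"
  shows "group_det (dicyclic n) (fW' n W) = (-1) ^ n * group_det (dicyclic n) (fW n W)"
proof -
  let ?M = "mat (4*n) (4*n) (\<lambda>(p,q). fW n W (dicyclic_mult n (enum n p) (dinv n (enum n q))))"
  have "mat (4*n) (4*n) (\<lambda>(p,q). fW' n W (dicyclic_mult n (enum n p) (dinv n (enum n q))))
      = mat (4*n) (4*n) (\<lambda>(p,q). ?M $$ (rot n p, q))"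
  proof (rule eq_matI)
    fix p q assume "p < dim_row (mat (4*n) (4*n) (\<lambda>(p,q). ?M $$ (rot n p, q)))" "q < dim_col (mat (4*n) (4*n) (\<lambda>(p,q). ?M $$ (rot n p, q)))"
    hence p: "p < 4*n" and q: "q < 4*n" by auto
    have rp: "rot n p < 4*n" using rot_perm[of n] p by (meson atLeastLessThan_iff permutes_in_image zero_le)
    have cp: "snd (enum n p) \<in> {0,1}" using enum_carrier[OF p] by (auto simp: dic_carrier)
    obtain c d where cd: "dinv n (enum n q) = (c, d)" "d \<in> {0,1}"
      by (cases "snd (enum n q) = 0") (auto simp: dinv_def)
    obtain a b where ab: "enum n p = (a, b)" by (cases "enum n p")
    have "dicyclic_mult n (int n, 1) (dicyclic_mult n (enum n p) (dinv n (enum n q)))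
        = dicyclic_mult n (dicyclic_mult n (int n, 1) (enum n p)) (dinv n (enum n q))"
      using dic_assoc[of 1 b d n "int n" a c] cp cd ab by simp
    also have "\<dots> = dicyclic_mult n (enum n (rot n p)) (dinv n (enum n q))" by (simp add: enum_rot[OF p])
    finally show "mat (4*n) (4*n) (\<lambda>(p,q). fW' n W (dicyclic_mult n (enum n p) (dinv n (enum n q)))) $$ (p, q)
      = mat (4*n) (4*n) (\<lambda>(p,q). ?M $$ (rot n p, q)) $$ (p, q)"
      using p q rp by (simp add: fW'_def)
  qed auto
  hence "group_det (dicyclic n) (fW' n W) = det (mat (4*n) (4*n) (\<lambda>(p,q). ?M $$ (rot n p, q)))"
    by (simp add: group_det_mat[OF n])
  also have "\<dots> = signof (rot n) * det ?M"
    by (rule det_permute_rows) (use rot_perm[of n] in auto)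
  also have "\<dots> = (-1) ^ n * group_det (dicyclic n) (fW n W)"
    using rot_perm[of n] by (simp add: group_det_mat[OF n])
  finally show ?thesis .
qed

theorem mainTheorem9:
  fixes n :: nat and m :: int
  assumes "odd n" and "gcd m (2 * int n) = 1"
  shows "m \<in> group_det_values (dicyclic n)"
proof -
  have odd: "odd n" by fact
  have n: "n > 0" using odd by (cases n) auto
  have cop: "coprime m (2 * int n)" using assms(2) by (simp add: coprime_iff_gcd_eq_1)
  hence modd: "odd m" and copn: "coprime m (int n)" by auto
  define m' where "m' = (if m mod 4 = 1 then m else - m)"
  have m'4: "m' mod 4 = 1" using modd unfolding m'_def by presburger
  have copm': "coprime m' (int n)" using copn unfolding m'_def by auto
  define t where "t = \<bar>m'\<bar>"
  define kI where "kI = m' + int n * (4 * t)"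
  have t1: "t \<ge> 1" using m'4 unfolding t_def by (cases "m' = 0") auto
  have kIpos: "kI > 0"
  proof -
    have a: "int n * (4 * t) \<ge> 4 * t" using n t1 by (simp add: mult_le_cancel_right1)
    have b: "- t \<le> m'" unfolding t_def by simp
    show ?thesis unfolding kI_def using a b t1 by linarith
  qed
  have kI4: "kI mod 4 = 1"
  proof -
    have e: "kI = m' + 4 * (int n * t)" unfolding kI_def by (simp add: ac_simps)
    have "\<forall>X. (m' + 4 * X) mod 4 = m' mod 4" by presburger
    thus ?thesis using e m'4 by simp
  qed
  have copk: "coprime kI (int n)"
  proof -
    have "gcd (int n) (m' + int n * (4 * t)) = gcd (int n) m'"
      using gcd_add_mult[of "int n" "4 * t" m'] by (simp add: ac_simps)
    thus ?thesis using copm' unfolding kI_def by (simp add: coprime_iff_gcd_eq_1 gcd.commute)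
  qed
  have kodd: "odd kI" using kI4 by presburger
  have copk2: "coprime kI (2 * int n)" using copk kodd by simp
  obtain u v where uv: "u * kI + v * (2 * int n) = 1"
    using bezout_int[of kI "2 * int n"] copk2 by (auto simp: coprime_iff_gcd_eq_1)
  define k'I where "k'I = u mod (2 * int n)"
  have k'Inn: "k'I \<ge> 0" using n by (simp add: k'I_def)
  have kk2: "(kI * k'I) mod (2 * int n) = 1 mod (2 * int n)"
  proof -
    have "(kI * k'I) mod (2 * int n) = (kI * u) mod (2 * int n)" unfolding k'I_def by (simp add: mod_mult_right_eq)
    also have "kI * u = 1 - v * (2 * int n)" using uv by (simp add: algebra_simps)
    also have "(1 - v * (2 * int n)) mod (2 * int n) = 1 mod (2 * int n)" by (simp add: mod_eq_dvd_iff)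
    finally show ?thesis .
  qed
  have k'odd: "odd k'I"
  proof -
    have 1: "((kI * k'I) mod (2 * int n)) mod 2 = (kI * k'I) mod 2" by (simp add: mod_mod_cancel)
    have "1 mod (2 * int n) = 1" using n by simp
    hence "(kI * k'I) mod 2 = 1" using 1 kk2 by simp
    thus ?thesis by (simp add: odd_iff_mod_2_eq_one[symmetric])
  qed
  define k where "k = nat kI"
  define k' where "k' = nat k'I"
  have kk: "int k = kI" "int k' = k'I" using kIpos k'Inn by (simp_all add: k_def k'_def)
  have k4: "k mod 4 = 1"
  proof -
    have "int (k mod 4) = 1" using kk(1) kI4 by (simp add: of_nat_mod)
    thus ?thesis by simp
  qed
  have koddn: "odd k" using k4 by presburger
  have k'oddn: "odd k'" using k'odd kk(2) by (metis even_of_nat)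
  have kk': "(int k * int k') mod int n = 1 mod int n"
  proof -
    have "(int k * int k') mod (2 * int n) = 1 mod (2 * int n)" using kk kk2 by simp
    hence "((int k * int k') mod (2 * int n)) mod int n = (1 mod (2 * int n)) mod int n" by simp
    thus ?thesis by (simp add: mod_mod_cancel)
  qed
  have kap: "(int k' * int k) mod int n = 1 mod int n" using kk' by (simp add: mult.commute)
  define c where "c = - t"
  define W where "W = Wel n k k' c"
  have D: "group_det (dicyclic n) (fW n W) = m'"
  proof -
    have "group_det (dicyclic n) (fW n W) = int k + 4 * c * int n"
      unfolding group_det_fW[OF n] W_def by (rule circ_final[OF n odd koddn k'oddn kk' k4 kap])
    also have "\<dots> = m'" unfolding kk c_def kI_def by (simp add: algebra_simps)
    finally show ?thesis .
  qed
  show ?thesis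
  proof (cases "m mod 4 = 1")
    case True
    hence "group_det (dicyclic n) (fW n W) = m" using D by (simp add: m'_def)
    thus ?thesis unfolding group_det_values_def by blast
  next
    case False
    have "group_det (dicyclic n) (fW' n W) = (-1) ^ n * m'" using D by (simp add: group_det_fW'[OF n])
    also have "\<dots> = m" using False odd by (simp add: m'_def)
    finally show ?thesis unfolding group_det_values_def by blast
  qed
qed

end
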